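(* Let two realisations of local affine Gaudin models be given, labelled $k\in\{1,2\}$, built on the same $\mathfrak g$, $\mathfrak g_0$, $\mathbb D$ and with the same constant $\ell^\infty\in\mathbb R\setminus\{0\}$. Model $k$ has site set $\Sigma^{(k)}$ (with $\Sigma^{(1)}\cap\Sigma^{(2)}=\emptyset$), multiplicities $m_\alpha$, levels $\ell^\alpha_{[p]}$, positions $z_\alpha$, Takiff currents $\mathcal J^\alpha_{[p]}(x)$ in a Poisson algebra $\mathcal A_k$, twist function $\varphi_k(z)=\sum_{\alpha\in\Sigma^{(k)}}\sum_{p=0}^{m_\alpha-1}\frac{\ell^\alpha_{[p]}}{(z-z_\alpha)^{p+1}}-\ell^\infty$ and Gaudin Lax matrix $\Gamma_k(z,x)=\sum_{\alpha\in\Sigma^{(k)}}\sum_{p=0}^{m_\alpha-1}\frac{\mathcal J^\alpha_{[p]}(x)}{(z-z_\alpha)^{p+1}}$. Let $M_k=\sum_{\alpha\in\Sigma^{(k)}}m_\alpha$, $M=M_1+M_2$, and assume the zeros of $\varphi_1$, labelled $\zeta^{(1)}_i$ ($1\le i\le M_1$), and those of $\varphi_2$, labelled $\zeta^{(2)}_i$ ($M_1<i\le M$), are simple. Let $\epsilon^{(1)}_i$ ($1\le i\le M_1$), $\epsilon^{(2)}_i$ ($M_1<i\le M$) be numbers and $\mathcal H_k=\sum_i\epsilon^{(k)}_i\mathcal Q^{(k)}_i$ with $\mathcal Q^{(k)}_i=-\frac{1}{2\varphi_k'(\zeta^{(k)}_i)}\int_{\mathbb D}dx\,\kappa\big(\Gamma_k(\zeta^{(k)}_i,x),\Gamma_k(\zeta^{(k)}_i,x)\big)$.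 For a real $\gamma\neq0$, consider the coupled model on $\mathcal A_1\otimes\mathcal A_2$ with sites $\Sigma^{(1)}\sqcup\Sigma^{(2)}$, the same multiplicities, levels and currents, the same constant $\ell^\infty$, and positions $w_\alpha=z_\alpha$ for $\alpha\in\Sigma^{(1)}$ and $w_\alpha=z_\alpha+\gamma^{-1}$ for $\alpha\in\Sigma^{(2)}$; its twist function is $\varphi_{1\otimes2,\gamma}(z)=\varphi_1(z)+\varphi_2(z-\gamma^{-1})+\ell^\infty$ and its Gaudin Lax matrix $\Gamma_{1\otimes 2,\gamma}(z,x)=\Gamma_1(z,x)+\Gamma_2(z-\gamma^{-1},x)$. Then: (i) for $\gamma$ small enough, one can order the $M$ zeros $\zeta_i(\gamma)$, $i\in\{1,\dots,M\}$, of $\varphi_{1\otimes2,\gamma}$ in such a way that $\zeta_i(\gamma)$ is canonically associated with $\zeta^{(k)}_i$, where $k=1$ if $i\le M_1$ and $k=2$ if $i>M_1$ (namely $\zeta_i(\gamma)\to\zeta^{(1)}_i$ for $i\le M_1$ and $\zeta_i(\gamma)-\gamma^{-1}\to\zeta^{(2)}_i$ for $i>M_1$ as $\gamma\to0$); moreover, for $\gamma$ small enough these zeros are simple. (ii) If one chooses $\epsilon_i=\epsilon^{(k)}_i$ (with $k$ as in (i)), then the coupled Hamiltonian $\mathcal H_\gamma=\sum_{i=1}^M\epsilon_i\Big(-\frac{1}{2\varphi_{1\otimes2,\gamma}'(\zeta_i(\gamma))}\int_{\mathbb D}dx\,\kappa\big(\Gamma_{1\otimes2,\gamma}(\zeta_i(\gamma),x),\Gamma_{1\otimes2,\gamma}(\zeta_i(\gamma),x)\big)\Big)$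 satisfies $\mathcal H_\gamma\to\mathcal H_1+\mathcal H_2$ as $\gamma\to0$.
   Context: $\mathfrak g$ is a finite-dimensional simple complex Lie algebra, $\kappa$ is minus its Killing form, $(I_a)$ a basis with $\kappa$-dual basis $(I^a)$, $C_{12}=I_a\otimes I^a$. $\mathfrak g_0$ is a real form, the fixed points of an antilinear involutive automorphism $\tau$. $\mathbb D$ is $\mathbb R$ or the circle, with coordinate $x$; $\delta_{xy}=\delta(x-y)$, $\delta'_{xy}=\partial_x\delta(x-y)$. A realisation of a local affine Gaudin model consists of: finite sets $\Sigma_r$ (real sites) and $\Sigma_c$ (complex sites), for each complex site $\alpha$ a conjugate site $\bar\alpha$, and $\Sigma=\Sigma_r\sqcup\Sigma_c\sqcup\bar\Sigma_c$; multiplicities $m_\alpha\ge1$ ($m_{\bar\alpha}=m_\alpha$); levels $\ell^\alpha_{[p]}$, $0\le p\le m_\alpha-1$, real for real sites, complex for complex sites, $\ell^{\bar\alpha}_{[p]}=\overline{\ell^\alpha_{[p]}}$, with $\ell^\alpha_{[m_\alpha-1]}\neq0$; pairwise distinct positions $z_\alpha$, real for real sites, $z_{\bar\alpha}=\overline{z_\alpha}$; a Poisson algebra $\mathcal A$ of local observables of a field theory on $\mathbb D$ containing $\mathfrak g$-valued fields $\mathcal J^\alpha_{[p]}(x)$ with $\{\mathcal J^\alpha_{[p]}{}_1(x),\mathcal J^\beta_{[q]}{}_2(y)\}=\delta_{\alpha\beta}\big([C_{12},\mathcal J^\alpha_{[p+q]}{}_1(x)]\delta_{xy}-\ell^\alpha_{[p+q]}C_{12}\delta'_{xy}\big)$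 if $p+q<m_\alpha$ and $0$ otherwise, and $\tau(\mathcal J^\alpha_{[p]})=\mathcal J^\alpha_{[p]}$ for real $\alpha$, $\tau(\mathcal J^\alpha_{[p]})=\mathcal J^{\bar\alpha}_{[p]}$ for complex $\alpha$. The tensor product $\mathcal A_1\otimes\mathcal A_2$ denotes the Poisson algebra generated by the fields of both algebras, with fields from different factors Poisson commuting. Sums over sites of model $k$ run over all its sites (real, complex and conjugate). *)

theory Defs
  imports "HOL-Analysis.Analysis"
begin

text \<open>Sites are elements of a type 's; the involution sig maps a complex site to its
  conjugate and fixes the real sites (so real sites = fixed points of sig).
  m = multiplicities, l alpha p = level l^alpha_[p], z = positions.\<close>

definition realisation ::
  "'s set \<Rightarrow> ('s \<Rightarrow> 's) \<Rightarrow> ('s \<Rightarrow> nat) \<Rightarrow> ('s \<Rightarrow> nat \<Rightarrow> complex) \<Rightarrow> ('s \<Rightarrow> complex) \<Rightarrow> bool"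
  where "realisation S sig m l z \<longleftrightarrow>
     finite S \<and> inj_on z S \<and>
     (\<forall>\<alpha>\<in>S. sig \<alpha> \<in> S \<and> sig (sig \<alpha>) = \<alpha> \<and> m (sig \<alpha>) = m \<alpha> \<and> 1 \<le> m \<alpha> \<and>
        (\<forall>p<m \<alpha>. l (sig \<alpha>) p = cnj (l \<alpha> p)) \<and>
        z (sig \<alpha>) = cnj (z \<alpha>) \<and>
        l \<alpha> (m \<alpha> - 1) \<noteq> 0)"

definition total_mult :: "'s set \<Rightarrow> ('s \<Rightarrow> nat) \<Rightarrow> nat"
  where "total_mult S m = (\<Sum>\<alpha>\<in>S. m \<alpha>)"

definition twist ::
  "'s set \<Rightarrow> ('s \<Rightarrow> nat) \<Rightarrow> ('s \<Rightarrow> nat \<Rightarrow> complex) \<Rightarrow> ('s \<Rightarrow> complex) \<Rightarrow> real \<Rightarrow> complex \<Rightarrow> complex"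
  where "twist S m l z linf w =
     (\<Sum>\<alpha>\<in>S. \<Sum>p<m \<alpha>. l \<alpha> p / (w - z \<alpha>) ^ (p + 1)) - complex_of_real linf"

definition twist_zeros ::
  "'s set \<Rightarrow> ('s \<Rightarrow> nat) \<Rightarrow> ('s \<Rightarrow> nat \<Rightarrow> complex) \<Rightarrow> ('s \<Rightarrow> complex) \<Rightarrow> real \<Rightarrow> complex set"
  where "twist_zeros S m l z linf = {w. w \<notin> z ` S \<and> twist S m l z linf w = 0}"

text \<open>The observable  int_D dx kappa(Gamma(w,x), Gamma(w,x)),  where
  Gamma(w,x) = sum_alpha sum_p J^alpha_[p](x)/(w - z_alpha)^(p+1).  By bilinearity of kappa
  and linearity of the integral it equals
  sum  K alpha p beta q / ((w-z_alpha)^(p+1) (w-z_beta)^(q+1)),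
  where K alpha p beta q c is the value, at the phase-space point c, of the local
  observable  int_D dx kappa(J^alpha_[p](x), J^beta_[q](x)).\<close>
definition quad_charge ::
  "'s set \<Rightarrow> ('s \<Rightarrow> nat) \<Rightarrow> ('s \<Rightarrow> complex) \<Rightarrow> ('s \<Rightarrow> nat \<Rightarrow> 's \<Rightarrow> nat \<Rightarrow> 'c \<Rightarrow> complex)
    \<Rightarrow> complex \<Rightarrow> 'c \<Rightarrow> complex"
  where "quad_charge S m z K w c =
     (\<Sum>\<alpha>\<in>S. \<Sum>p<m \<alpha>. \<Sum>\<beta>\<in>S. \<Sum>q<m \<beta>.
        K \<alpha> p \<beta> q c / ((w - z \<alpha>) ^ (p + 1) * (w - z \<beta>) ^ (q + 1)))"

definition local_charge ::
  "'s set \<Rightarrow> ('s \<Rightarrow> nat) \<Rightarrow> ('s \<Rightarrow> nat \<Rightarrow> complex) \<Rightarrow> ('s \<Rightarrow> complex) \<Rightarrow> real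
    \<Rightarrow> ('s \<Rightarrow> nat \<Rightarrow> 's \<Rightarrow> nat \<Rightarrow> 'c \<Rightarrow> complex) \<Rightarrow> complex \<Rightarrow> 'c \<Rightarrow> complex"
  where "local_charge S m l z linf K \<zeta> c =
     - (1 / (2 * deriv (twist S m l z linf) \<zeta>)) * quad_charge S m z K \<zeta> c"

definition coupled_pos :: "'s set \<Rightarrow> ('s \<Rightarrow> complex) \<Rightarrow> real \<Rightarrow> 's \<Rightarrow> complex"
  where "coupled_pos S1 z \<gamma> \<alpha> = (if \<alpha> \<in> S1 then z \<alpha> else z \<alpha> + complex_of_real (1 / \<gamma>))"

end

theory Submission
  imports Defs "HOL-Complex_Analysis.Complex_Analysis" "HOL-Computational_Algebra.Polynomial"
begin

definition Qp :: "'s set \<Rightarrow> ('s \<Rightarrow> nat) \<Rightarrow> ('s \<Rightarrow> complex) \<Rightarrow> complex poly" where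
 "Qp S m z = (\<Prod>\<alpha>\<in>S. [:- z \<alpha>, 1:] ^ m \<alpha>)"
definition Tp :: "'s set \<Rightarrow> ('s \<Rightarrow> nat) \<Rightarrow> ('s \<Rightarrow> nat \<Rightarrow> complex) \<Rightarrow> ('s \<Rightarrow> complex) \<Rightarrow> complex poly" where
 "Tp S m l z = (\<Sum>\<alpha>\<in>S. \<Sum>p<m \<alpha>. smult (l \<alpha> p) ([:- z \<alpha>, 1:] ^ (m \<alpha> - Suc p) * (\<Prod>\<beta>\<in>S-{\<alpha>}. [:- z \<beta>, 1:] ^ m \<beta>)))"
definition Pp :: "'s set \<Rightarrow> ('s \<Rightarrow> nat) \<Rightarrow> ('s \<Rightarrow> nat \<Rightarrow> complex) \<Rightarrow> ('s \<Rightarrow> complex) \<Rightarrow> real \<Rightarrow> complex poly" where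
 "Pp S m l z linf = Tp S m l z - smult (of_real linf) (Qp S m z)"

lemma poly_Qp: "poly (Qp S m z) x = (\<Prod>\<alpha>\<in>S. (x - z \<alpha>) ^ m \<alpha>)"
  by (simp add: Qp_def poly_prod)

lemma poly_Qp_nz: "finite S \<Longrightarrow> x \<notin> z ` S \<Longrightarrow> poly (Qp S m z) x \<noteq> 0"
  by (auto simp: poly_Qp)

lemma poly_lin: "poly [:- a, 1:] x = x - (a::complex)"
  by simp

lemma aux_cancel: "(y::complex) \<noteq> 0 \<Longrightarrow> c / y * (y * Y) = c * Y"
  by simp

lemma twist_mult_Qp:
  assumes "finite S" "x \<notin> z ` S"
  shows "twist S m l z linf x * poly (Qp S m z) x = poly (Pp S m l z linf) x"
proof -
  have eq: "l \<alpha> p / (x - z \<alpha>) ^ (p+1) * poly (Qp S m z) x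
     = l \<alpha> p * ((x - z \<alpha>) ^ (m \<alpha> - Suc p) * (\<Prod>\<beta>\<in>S-{\<alpha>}. (x - z \<beta>) ^ m \<beta>))"
    if "\<alpha> \<in> S" "p < m \<alpha>" for \<alpha> p
  proof -
    have q: "poly (Qp S m z) x = (x - z \<alpha>) ^ m \<alpha> * (\<Prod>\<beta>\<in>S-{\<alpha>}. (x - z \<beta>) ^ m \<beta>)"
      using that assms unfolding poly_Qp by (simp add: prod.remove)
    have e: "(p+1) + (m \<alpha> - Suc p) = m \<alpha>" using that by simp
    have "(x - z \<alpha>) ^ ((p+1) + (m \<alpha> - Suc p)) = (x - z \<alpha>)^(p+1) * (x - z \<alpha>) ^ (m \<alpha> - Suc p)"
      by (rule power_add)
    then have "(x - z \<alpha>) ^ m \<alpha> = (x - z \<alpha>)^(p+1) * (x - z \<alpha>) ^ (m \<alpha> - Suc p)"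
      unfolding e .
    with q have q2: "poly (Qp S m z) x = (x - z \<alpha>)^(p+1) * ((x - z \<alpha>) ^ (m \<alpha> - Suc p) * (\<Prod>\<beta>\<in>S-{\<alpha>}. (x - z \<beta>) ^ m \<beta>))"
      by (simp only: mult.assoc)
    have "x - z \<alpha> \<noteq> 0" using assms that by auto
    then have "(x - z \<alpha>)^(p+1) \<noteq> 0" by simp
    then show ?thesis unfolding q2 by (rule aux_cancel)
  qed
  have "twist S m l z linf x * poly (Qp S m z) x =
     (\<Sum>\<alpha>\<in>S. \<Sum>p<m \<alpha>. l \<alpha> p / (x - z \<alpha>) ^ (p + 1) * poly (Qp S m z) x) - of_real linf * poly (Qp S m z) x"
    unfolding twist_def by (simp only: left_diff_distrib sum_distrib_right)
  also have "\<dots> = (\<Sum>\<alpha>\<in>S. \<Sum>p<m \<alpha>. l \<alpha> p * ((x - z \<alpha>) ^ (m \<alpha> - Suc p) * (\<Prod>\<beta>\<in>S-{\<alpha>}. (x - z \<beta>) ^ m \<beta>)))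
        - of_real linf * poly (Qp S m z) x"
    by (intro arg_cong2[where f="(-)"] sum.cong refl eq) auto
  also have "\<dots> = poly (Pp S m l z linf) x"
    by (simp only: Pp_def Tp_def poly_diff poly_sum poly_smult poly_mult poly_power poly_prod poly_lin poly_Qp)
  finally show ?thesis .
qed

lemma degree_Qp: "finite S \<Longrightarrow> degree (Qp S m z) = total_mult S m"
  unfolding Qp_def total_mult_def
  by (subst degree_prod_sum_eq) (auto simp: degree_linear_power)

lemma lead_Qp: "lead_coeff (Qp S m z) = 1"
  unfolding Qp_def by (simp add: lead_coeff_prod lead_coeff_power)

lemma degree_Tp_term:
  fixes z :: "'s \<Rightarrow> complex" and l :: "'s \<Rightarrow> nat \<Rightarrow> complex"
  assumes "finite S" "\<alpha> \<in> S" "p < m \<alpha>"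
  shows "degree (smult (l \<alpha> p) ([:- z \<alpha>, 1:] ^ (m \<alpha> - Suc p) * (\<Prod>\<beta>\<in>S-{\<alpha>}. [:- z \<beta>, 1:] ^ m \<beta>)))
     < total_mult S m"
proof -
  have M: "total_mult S m = m \<alpha> + (\<Sum>\<beta>\<in>S-{\<alpha>}. m \<beta>)"
    unfolding total_mult_def using assms by (simp add: sum.remove)
  have "degree (\<Prod>\<beta>\<in>S-{\<alpha>}. [:- z \<beta>, 1:] ^ m \<beta>) = (\<Sum>\<beta>\<in>S-{\<alpha>}. m \<beta>)"
    apply (subst degree_prod_sum_eq)
     apply simp
    apply (simp add: degree_linear_power)
    done
  then have "degree (smult (l \<alpha> p) ([:- z \<alpha>, 1:] ^ (m \<alpha> - Suc p) * (\<Prod>\<beta>\<in>S-{\<alpha>}. [:- z \<beta>, 1:] ^ m \<beta>)))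
     \<le> (m \<alpha> - Suc p) + (\<Sum>\<beta>\<in>S-{\<alpha>}. m \<beta>)"
    using degree_mult_le[of "[:- z \<alpha>, 1:] ^ (m \<alpha> - Suc p)" "\<Prod>\<beta>\<in>S-{\<alpha>}. [:- z \<beta>, 1:] ^ m \<beta>"]
      degree_smult_le[of "l \<alpha> p" "[:- z \<alpha>, 1:] ^ (m \<alpha> - Suc p) * (\<Prod>\<beta>\<in>S-{\<alpha>}. [:- z \<beta>, 1:] ^ m \<beta>)"]
    by (simp add: degree_linear_power)
  then show ?thesis using M assms by linarith
qed

lemma Pp_props:
  assumes "finite S" "linf \<noteq> 0"
  shows "degree (Pp S m l z linf) = total_mult S m" "Pp S m l z linf \<noteq> 0"
proof -
  let ?M = "total_mult S m"
  have cT: "coeff (Tp S m l z) ?M = 0"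
    unfolding Tp_def coeff_sum
    by (intro sum.neutral ballI coeff_eq_0 degree_Tp_term[OF assms(1)]) auto
  have dT: "degree (Tp S m l z) \<le> ?M"
    unfolding Tp_def
    by (intro degree_sum_le assms(1) finite_lessThan)
       (intro ballI less_imp_le degree_Tp_term[OF assms(1)]; simp)
  have cQ: "coeff (Qp S m z) ?M = 1"
    using lead_Qp[of S m z] degree_Qp[OF assms(1), of m z] by simp
  have cP: "coeff (Pp S m l z linf) ?M = - of_real linf"
    by (simp add: Pp_def cT cQ)
  have dP: "degree (Pp S m l z linf) \<le> ?M"
    unfolding Pp_def using dT degree_Qp[OF assms(1)]
      degree_smult_le[of "of_real linf" "Qp S m z"]
    by (intro degree_diff_le) auto
  have "coeff (Pp S m l z linf) ?M \<noteq> 0" using cP assms by simp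
  then show "degree (Pp S m l z linf) = ?M" using dP le_degree by (metis antisym)
  show "Pp S m l z linf \<noteq> 0" using \<open>coeff _ _ \<noteq> 0\<close> by auto
qed

lemma twist_zeros_sub:
  assumes "finite S"
  shows "twist_zeros S m l z linf \<subseteq> {x. poly (Pp S m l z linf) x = 0}"
proof
  fix x assume "x \<in> twist_zeros S m l z linf"
  then have x: "x \<notin> z ` S" "twist S m l z linf x = 0" unfolding twist_zeros_def by auto
  then show "x \<in> {x. poly (Pp S m l z linf) x = 0}"
    using twist_mult_Qp[OF assms x(1), of m l linf] by simp
qed

lemma twist_zeros_card:
  assumes "finite S" "linf \<noteq> 0"
  shows "finite (twist_zeros S m l z linf)" "card (twist_zeros S m l z linf) \<le> total_mult S m"
proof -
  have f: "finite {x. poly (Pp S m l z linf) x = 0}"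
    by (rule poly_roots_finite[OF Pp_props(2)[OF assms]])
  then show "finite (twist_zeros S m l z linf)" by (rule finite_subset[OF twist_zeros_sub[OF assms(1)]])
  have "card (twist_zeros S m l z linf) \<le> card {x. poly (Pp S m l z linf) x = 0}"
    using card_mono[OF f twist_zeros_sub[OF assms(1)]] .
  also have "\<dots> \<le> total_mult S m"
    using card_poly_roots_bound[OF Pp_props(2)[OF assms]] Pp_props(1)[OF assms] by simp
  finally show "card (twist_zeros S m l z linf) \<le> total_mult S m" .
qed

lemma twist_DERIV_PQ:
  assumes "finite S" "x \<notin> z ` S"
  shows "(twist S m l z linf has_field_derivative
     (poly (pderiv (Pp S m l z linf)) x * poly (Qp S m z) x - poly (Pp S m l z linf) x * poly (pderiv (Qp S m z)) x)
       / (poly (Qp S m z) x * poly (Qp S m z) x)) (at x)"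
proof -
  let ?U = "- (z ` S)"
  have U: "open ?U" using assms by (simp add: open_Compl finite_imp_closed)
  have d: "((\<lambda>y. poly (Pp S m l z linf) y / poly (Qp S m z) y) has_field_derivative
     (poly (pderiv (Pp S m l z linf)) x * poly (Qp S m z) x - poly (Pp S m l z linf) x * poly (pderiv (Qp S m z)) x)
       / (poly (Qp S m z) x * poly (Qp S m z) x)) (at x)"
    by (rule DERIV_divide[OF poly_DERIV poly_DERIV poly_Qp_nz[OF assms]])
  show ?thesis
  proof (rule has_field_derivative_transform_within_open[OF d U])
    show "x \<in> ?U" using assms by simp
    fix y assume "y \<in> ?U"
    then have "y \<notin> z ` S" by simp
    then show "poly (Pp S m l z linf) y / poly (Qp S m z) y = twist S m l z linf y"
      using twist_mult_Qp[OF assms(1), of y] poly_Qp_nz[OF assms(1), of y]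
      by (metis nonzero_eq_divide_eq)
  qed
qed

lemma twist_simple:
  assumes fin: "finite S" and linf: "linf \<noteq> 0" and zt: "\<zeta> \<in> twist_zeros S m l z linf"
    and cardM: "total_mult S m \<le> card (twist_zeros S m l z linf)"
  shows "deriv (twist S m l z linf) \<zeta> \<noteq> 0"
proof
  assume d0: "deriv (twist S m l z linf) \<zeta> = 0"
  define P where "P = Pp S m l z linf"
  define Q where "Q = Qp S m z"
  have np: "\<zeta> \<notin> z ` S" and tz: "twist S m l z linf \<zeta> = 0"
    using zt unfolding twist_zeros_def by auto
  have P0: "poly P \<zeta> = 0" using twist_mult_Qp[OF fin np, of m l linf] tz unfolding P_def by simp
  have Qnz: "poly Q \<zeta> \<noteq> 0" using poly_Qp_nz[OF fin np] unfolding Q_def .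
  have "deriv (twist S m l z linf) \<zeta> =
     (poly (pderiv P) \<zeta> * poly Q \<zeta> - poly P \<zeta> * poly (pderiv Q) \<zeta>) / (poly Q \<zeta> * poly Q \<zeta>)"
    unfolding P_def Q_def by (rule DERIV_imp_deriv[OF twist_DERIV_PQ[OF fin np]])
  then have P'0: "poly (pderiv P) \<zeta> = 0" using d0 P0 Qnz by simp
  obtain R where R: "P = [:-\<zeta>, 1:] * R" using P0 poly_eq_0_iff_dvd by (metis dvdE)
  have pd: "pderiv [:-\<zeta>, 1:] = 1" by (simp add: pderiv_pCons)
  have "pderiv P = R + [:-\<zeta>, 1:] * pderiv R" unfolding R pderiv_mult pd by simp
  then have "poly (pderiv P) \<zeta> = poly R \<zeta>" by simp
  then have "poly R \<zeta> = 0" using P'0 by simp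
  then obtain R2 where R2: "R = [:-\<zeta>, 1:] * R2" using poly_eq_0_iff_dvd by (metis dvdE)
  have Pnz: "P \<noteq> 0" unfolding P_def using Pp_props[OF fin linf] by simp
  have PR2: "P = [:-\<zeta>, 1:]^2 * R2" unfolding R R2 power2_eq_square by (simp only: mult.assoc)
  then have R2nz: "R2 \<noteq> 0" using Pnz by auto
  have degP: "degree P = total_mult S m" unfolding P_def using Pp_props[OF fin linf] by simp
  have "degree P = 2 + degree R2" unfolding PR2 using R2nz
    by (simp add: degree_mult_eq degree_linear_power)
  then have dR2: "degree R2 + 2 = total_mult S m" using degP by simp
  have sub: "twist_zeros S m l z linf - {\<zeta>} \<subseteq> {x. poly R2 x = 0}"
  proof
    fix x assume x: "x \<in> twist_zeros S m l z linf - {\<zeta>}"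
    then have xx: "x \<notin> z ` S" "twist S m l z linf x = 0" unfolding twist_zeros_def by auto
    then have "poly P x = 0" using twist_mult_Qp[OF fin xx(1), of m l linf] unfolding P_def by simp
    then have "(x - \<zeta>)^2 * poly R2 x = 0" unfolding PR2 by simp
    then show "x \<in> {x. poly R2 x = 0}" using x by simp
  qed
  have fz: "finite (twist_zeros S m l z linf)" using twist_zeros_card[OF fin linf] by simp
  have c1: "card (twist_zeros S m l z linf - {\<zeta>}) = card (twist_zeros S m l z linf) - 1"
    using zt fz by simp
  have c2: "card (twist_zeros S m l z linf - {\<zeta>}) \<le> card {x. poly R2 x = 0}"
    by (rule card_mono[OF poly_roots_finite[OF R2nz] sub])
  have c3: "card {x. poly R2 x = 0} \<le> degree R2" by (rule card_poly_roots_bound[OF R2nz])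
  show False using c1 c2 c3 cardM dR2 by linarith
qed

definition Dform :: "'s set \<Rightarrow> ('s \<Rightarrow> nat) \<Rightarrow> ('s \<Rightarrow> nat \<Rightarrow> complex) \<Rightarrow> ('s \<Rightarrow> complex) \<Rightarrow> complex \<Rightarrow> complex" where
  "Dform S m l z w = (\<Sum>\<alpha>\<in>S. \<Sum>p<m \<alpha>. - (of_nat (Suc p)) * l \<alpha> p * inverse (w - z \<alpha>) ^ (p+2))"

lemma term_alg: fixes y c :: complex assumes nz: "y \<noteq> 0"
  shows "(0 * y ^ (p + 1) - c * (complex_of_nat (p + 1) * ((1 - 0) * y ^ (p + 1 - Suc 0)))) / (y ^ (p + 1) * y ^ (p + 1)) =
     - complex_of_nat (Suc p) * c * inverse y ^ (p + 2)"
proof -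
  have e: "y ^ (p + 1) * y ^ (p + 1) = y^p * y^(p+2)" by (simp flip: power_add)
  have "y^p \<noteq> 0" using nz by simp
  then show ?thesis unfolding e using nz by (simp add: power_inverse field_simps)
qed

lemma term_DERIV:
  fixes a c w :: complex
  assumes "w \<noteq> a"
  shows "((\<lambda>w. c / (w - a) ^ (p + 1)) has_field_derivative - (of_nat (Suc p)) * c * inverse (w - a) ^ (p+2)) (at w)"
proof -
  have nz: "w - a \<noteq> 0" using assms by simp
  show ?thesis
    apply (rule derivative_eq_intros refl | simp add: nz)+
    subgoal using assms by simp
    using nz by (rule term_alg)
qed

lemma twist_DERIV:
  assumes "finite S" "w \<notin> z ` S"
  shows "(twist S m l z linf has_field_derivative Dform S m l z w) (at w)"
proof -
  have "((\<lambda>w. (\<Sum>\<alpha>\<in>S. \<Sum>p<m \<alpha>. l \<alpha> p / (w - z \<alpha>) ^ (p + 1)) - of_real linf) has_field_derivative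
      (\<Sum>\<alpha>\<in>S. \<Sum>p<m \<alpha>. - (of_nat (Suc p)) * l \<alpha> p * inverse (w - z \<alpha>) ^ (p+2)) - 0) (at w)"
    apply (intro DERIV_diff DERIV_sum DERIV_const)
    using assms by (intro term_DERIV) auto
  then show ?thesis unfolding Dform_def twist_def[abs_def] by simp
qed

lemma deriv_twist: "finite S \<Longrightarrow> w \<notin> z ` S \<Longrightarrow> deriv (twist S m l z linf) w = Dform S m l z w"
  by (rule DERIV_imp_deriv[OF twist_DERIV])

lemma twist_holo:
  assumes "finite S" "\<And>u \<alpha>. u \<in> U \<Longrightarrow> \<alpha> \<in> S \<Longrightarrow> u + s \<noteq> z \<alpha>"
  shows "(\<lambda>u. twist S m l z linf (u + s)) holomorphic_on U"
  unfolding twist_def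
  using assms by (intro holomorphic_intros) auto

lemma twist_far:
  assumes fin: "finite S" and e: "e > 0"
  obtains R where "R > 0" "\<And>w. (\<forall>\<alpha>\<in>S. R \<le> norm (w - z \<alpha>)) \<Longrightarrow> norm (twist S m l z linf w + of_real linf) \<le> e"
proof -
  define L where "L = (\<Sum>\<alpha>\<in>S. \<Sum>p<m \<alpha>. norm (l \<alpha> p))"
  define R where "R = max 1 (L / e)"
  have R1: "1 \<le> R" unfolding R_def by simp
  have L0: "0 \<le> L" unfolding L_def by (intro sum_nonneg) auto
  show ?thesis
  proof (rule that[of R])
    show "R > 0" using R1 by simp
    fix w assume H: "\<forall>\<alpha>\<in>S. R \<le> norm (w - z \<alpha>)"
    have bnd: "norm (l \<alpha> p / (w - z \<alpha>) ^ (p + 1)) \<le> norm (l \<alpha> p) / R" if "\<alpha> \<in> S" for \<alpha> p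
    proof -
      have a: "R \<le> norm (w - z \<alpha>)" using H that by auto
      have "norm (w - z \<alpha>) ^ 1 \<le> norm (w - z \<alpha>) ^ (p + 1)"
        using a R1 by (intro power_increasing) auto
      then have "norm (w - z \<alpha>) \<le> norm (w - z \<alpha>) ^ (p + 1)" by simp
      then have "R \<le> norm (w - z \<alpha>) ^ (p + 1)" using a by linarith
      moreover have "0 < norm (w - z \<alpha>) ^ (p + 1) * R"
        using \<open>R \<le> norm (w - z \<alpha>) ^ (p + 1)\<close> R1 by (intro mult_pos_pos) linarith+
      ultimately have "norm (l \<alpha> p) / norm (w - z \<alpha>) ^ (p + 1) \<le> norm (l \<alpha> p) / R"
        by (intro divide_left_mono) auto
      then show ?thesis by (simp only: norm_divide norm_power)
    qed
    have "norm (twist S m l z linf w + of_real linf) = norm (\<Sum>\<alpha>\<in>S. \<Sum>p<m \<alpha>. l \<alpha> p / (w - z \<alpha>)^(p+1))"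
      by (simp add: twist_def)
    also have "\<dots> \<le> (\<Sum>\<alpha>\<in>S. norm (\<Sum>p<m \<alpha>. l \<alpha> p / (w - z \<alpha>)^(p+1)))" by (rule norm_sum)
    also have "\<dots> \<le> (\<Sum>\<alpha>\<in>S. \<Sum>p<m \<alpha>. norm (l \<alpha> p / (w - z \<alpha>)^(p+1)))"
      by (intro sum_mono norm_sum)
    also have "\<dots> \<le> (\<Sum>\<alpha>\<in>S. \<Sum>p<m \<alpha>. norm (l \<alpha> p) / R)"
      by (intro sum_mono bnd)
    also have "\<dots> = L / R" by (simp add: L_def sum_divide_distrib)
    also have "\<dots> \<le> e"
    proof -
      have "L / e \<le> R" unfolding R_def by simp
      then have "e * (L / e) \<le> e * R" using e by (intro mult_left_mono) auto
      then have "L \<le> e * R" using e by simp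
      then show ?thesis using R1 by (simp add: divide_le_eq)
    qed
    finally show "norm (twist S m l z linf w + of_real linf) \<le> e" .
  qed
qed

lemma min_modulus_zero:
  fixes f :: "complex \<Rightarrow> complex"
  assumes r: "r > 0" and hol: "f holomorphic_on ball a r" and cont: "continuous_on (cball a r) f"
    and fa: "norm (f a) < e" and sph: "\<And>w. w \<in> sphere a r \<Longrightarrow> e \<le> norm (f w)"
  shows "\<exists>w\<in>ball a r. f w = 0"
proof (rule ccontr)
  assume "\<not> ?thesis"
  then have nzb: "\<And>w. w \<in> ball a r \<Longrightarrow> f w \<noteq> 0" by auto
  have e0: "e > 0" using fa norm_ge_zero[of "f a"] by linarith
  have nzs: "\<And>w. w \<in> sphere a r \<Longrightarrow> f w \<noteq> 0" using sph e0 by force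
  have nz: "\<And>w. w \<in> cball a r \<Longrightarrow> f w \<noteq> 0"
    using nzb nzs by (auto simp: dist_commute less_le)
  have "norm (inverse (f a)) \<le> inverse e"
  proof (rule maximum_modulus_frontier[where S="ball a r" and f="\<lambda>w. inverse (f w)"])
    show "(\<lambda>w. inverse (f w)) holomorphic_on interior (ball a r)"
      using hol nzb by (auto intro!: holomorphic_intros)
    show "continuous_on (closure (ball a r)) (\<lambda>w. inverse (f w))"
      using cont nz r by (auto intro!: continuous_intros simp: closure_ball)
    show "bounded (ball a r)" by simp
    show "a \<in> ball a r" using r by simp
    fix w assume "w \<in> frontier (ball a r)"
    then have w: "w \<in> sphere a r" using r by (simp add: frontier_ball)
    show "norm (inverse (f w)) \<le> inverse e"
      using sph[OF w] e0 by (simp add: norm_inverse le_imp_inverse_le)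
  qed
  moreover have "inverse e < norm (inverse (f a))"
    using fa nzb[of a] r e0 by (simp add: norm_inverse less_imp_inverse_less)
  ultimately show False by simp
qed

lemma local_zero:
  assumes fin: "finite S" "finite S'" and r: "r > 0"
    and disj: "\<And>\<alpha> w. \<alpha> \<in> S \<Longrightarrow> w \<in> cball a r \<Longrightarrow> w \<noteq> z \<alpha>"
    and nzs: "\<And>w. w \<in> sphere a r \<Longrightarrow> twist S m l z linf w \<noteq> 0"
    and za: "twist S m l z linf a = 0"
  shows "\<exists>T>0. \<forall>s. T \<le> norm s \<longrightarrow> (\<exists>u\<in>ball a r.
      twist S m l z linf u + (twist S' m l z linf (u + s) + of_real linf) = 0 \<and> (\<forall>\<beta>\<in>S'. u + s \<noteq> z \<beta>))"
proof -
  let ?f = "twist S m l z linf"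
  have holf: "?f holomorphic_on cball a r"
    using twist_holo[OF fin(1), of "cball a r" 0] disj by simp
  have contf: "continuous_on (sphere a r) (\<lambda>w. norm (?f w))"
    by (intro continuous_intros continuous_on_subset[OF holomorphic_on_imp_continuous_on[OF holf]]) auto
  have sne: "sphere a r \<noteq> {}" using r by simp
  obtain x0 where x0: "x0 \<in> sphere a r" "\<And>y. y \<in> sphere a r \<Longrightarrow> norm (?f x0) \<le> norm (?f y)"
    using continuous_attains_inf[OF compact_sphere sne contf] by blast
  define c where "c = norm (?f x0)"
  have c0: "c > 0" unfolding c_def using nzs[OF x0(1)] by simp
  obtain R where R0: "R > 0" and Rb: "\<And>w. (\<forall>\<alpha>\<in>S'. R \<le> norm (w - z \<alpha>)) \<Longrightarrow>
      norm (twist S' m l z linf w + of_real linf) \<le> c / 3"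
    using twist_far[OF fin(2), of "c/3" z m l linf] c0 by auto
  define T where "T = R + norm a + r + (\<Sum>\<beta>\<in>S'. norm (z \<beta>))"
  have T0: "T > 0" unfolding T_def using R0 r by (simp add: add_pos_nonneg sum_nonneg)
  have main: "\<exists>u\<in>ball a r.
      ?f u + (twist S' m l z linf (u + s) + of_real linf) = 0 \<and> (\<forall>\<beta>\<in>S'. u + s \<noteq> z \<beta>)"
    if s: "T \<le> norm s" for s
  proof -
    have far: "R \<le> norm (u + s - z \<beta>)" if u: "u \<in> cball a r" and b: "\<beta> \<in> S'" for u \<beta>
    proof -
      have "norm u \<le> norm a + r" using u norm_triangle_ineq2[of u a] by (auto simp: dist_norm norm_minus_commute)
      moreover have "norm (z \<beta>) \<le> (\<Sum>\<beta>\<in>S'. norm (z \<beta>))"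
        using b fin(2) by (intro member_le_sum) auto
      moreover have "norm s - norm u - norm (z \<beta>) \<le> norm (u + s - z \<beta>)"
        using norm_triangle_ineq4[of "u + s" "z \<beta>"] norm_triangle_ineq2[of s "-u"]
        by (smt (verit) add.commute diff_minus_eq_add norm_minus_cancel norm_triangle_ineq2)
      ultimately show ?thesis using s unfolding T_def by linarith
    qed
    have np: "u + s \<noteq> z \<beta>" if "u \<in> cball a r" "\<beta> \<in> S'" for u \<beta>
      using far[OF that] R0 by auto
    have hb: "norm (twist S' m l z linf (u + s) + of_real linf) \<le> c / 3" if "u \<in> cball a r" for u
      using Rb far that by auto
    let ?g = "\<lambda>u. ?f u + (twist S' m l z linf (u + s) + of_real linf)"
    have holg: "?g holomorphic_on cball a r"
      using holf twist_holo[OF fin(2), of "cball a r" s] np by (intro holomorphic_intros) auto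
    have "\<exists>u\<in>ball a r. ?g u = 0"
    proof (rule min_modulus_zero[where f="?g" and e="2 * c / 3" and a=a and r=r, OF r])
      show "?g holomorphic_on ball a r" using holg by (rule holomorphic_on_subset) auto
      show "continuous_on (cball a r) ?g" using holg by (rule holomorphic_on_imp_continuous_on)
      show "norm (?g a) < 2 * c / 3" using hb[of a] za r c0 by simp
      fix w assume w: "w \<in> sphere a r"
      have "c \<le> norm (?f w)" using x0(2)[OF w] unfolding c_def .
      moreover have "norm (twist S' m l z linf (w + s) + of_real linf) \<le> c / 3" using hb w by auto
      moreover have "norm (?f w) - norm (twist S' m l z linf (w + s) + of_real linf) \<le> norm (?g w)"
        by (rule norm_diff_ineq)
      ultimately show "2 * c / 3 \<le> norm (?g w)" by linarith
    qed
    then obtain u where "u \<in> ball a r" "?g u = 0" by blast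
    then show ?thesis using np by auto
  qed
  show ?thesis using T0 main by blast
qed

lemma coupled_decomp:
  assumes fin: "finite S1" "finite S2" and disj: "S1 \<inter> S2 = {}"
  shows "twist (S1 \<union> S2) m l (coupled_pos S1 z \<gamma>) linf w =
     twist S1 m l z linf w + (twist S2 m l z linf (w - of_real (1/\<gamma>)) + of_real linf)"
proof -
  have a: "(\<Sum>\<alpha>\<in>S1. \<Sum>p<m \<alpha>. l \<alpha> p / (w - coupled_pos S1 z \<gamma> \<alpha>)^(p+1))
      = (\<Sum>\<alpha>\<in>S1. \<Sum>p<m \<alpha>. l \<alpha> p / (w - z \<alpha>)^(p+1))"
    by (intro sum.cong refl) (simp add: coupled_pos_def)
  have b: "(\<Sum>\<alpha>\<in>S2. \<Sum>p<m \<alpha>. l \<alpha> p / (w - coupled_pos S1 z \<gamma> \<alpha>)^(p+1))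
      = (\<Sum>\<alpha>\<in>S2. \<Sum>p<m \<alpha>. l \<alpha> p / (w - of_real (1/\<gamma>) - z \<alpha>)^(p+1))"
  proof (intro sum.cong refl)
    fix \<alpha> p assume "\<alpha> \<in> S2"
    then have "\<alpha> \<notin> S1" using disj by auto
    then have h: "w - coupled_pos S1 z \<gamma> \<alpha> = w - of_real (1/\<gamma>) - z \<alpha>"
      by (simp add: coupled_pos_def)
    show "l \<alpha> p / (w - coupled_pos S1 z \<gamma> \<alpha>)^(p+1) = l \<alpha> p / (w - of_real (1/\<gamma>) - z \<alpha>)^(p+1)"
      by (simp only: h)
  qed
  show ?thesis unfolding twist_def sum.union_disjoint[OF fin disj] a b by simp
qed

lemma coupled_pole_iff:
  assumes disj: "S1 \<inter> S2 = {}"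
  shows "w \<in> coupled_pos S1 z \<gamma> ` (S1 \<union> S2) \<longleftrightarrow> w \<in> z ` S1 \<or> w - of_real (1/\<gamma>) \<in> z ` S2"
proof
  assume "w \<in> coupled_pos S1 z \<gamma> ` (S1 \<union> S2)"
  then obtain \<alpha> where \<alpha>: "\<alpha> \<in> S1 \<union> S2" "w = coupled_pos S1 z \<gamma> \<alpha>" by auto
  show "w \<in> z ` S1 \<or> w - of_real (1/\<gamma>) \<in> z ` S2"
  proof (cases "\<alpha> \<in> S1")
    case True then show ?thesis using \<alpha> by (simp add: coupled_pos_def)
  next
    case False then have "\<alpha> \<in> S2" using \<alpha> by auto
    then show ?thesis using \<alpha> False by (simp add: coupled_pos_def)
  qed
next
  assume "w \<in> z ` S1 \<or> w - of_real (1/\<gamma>) \<in> z ` S2"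
  then show "w \<in> coupled_pos S1 z \<gamma> ` (S1 \<union> S2)"
  proof
    assume "w \<in> z ` S1"
    then obtain \<alpha> where "\<alpha> \<in> S1" "w = z \<alpha>" by auto
    then show ?thesis by (force simp: coupled_pos_def)
  next
    assume "w - of_real (1/\<gamma>) \<in> z ` S2"
    then obtain \<alpha> where a: "\<alpha> \<in> S2" "w - of_real (1/\<gamma>) = z \<alpha>" by auto
    then have "\<alpha> \<notin> S1" using disj by auto
    then have "coupled_pos S1 z \<gamma> \<alpha> = w" using a by (simp add: coupled_pos_def algebra_simps)
    then show ?thesis using a(1) by (metis UnI2 image_eqI)
  qed
qed

lemma inv_shift_lim:
  fixes a :: "real \<Rightarrow> complex"
  assumes lim: "(a \<longlongrightarrow> a0) (at (0::real))"
  shows "((\<lambda>\<gamma>. inverse (a \<gamma> - of_real (1/\<gamma>))) \<longlongrightarrow> 0) (at 0)"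
    and "((\<lambda>\<gamma>. inverse (a \<gamma> + of_real (1/\<gamma>))) \<longlongrightarrow> 0) (at 0)"
proof -
  have l1: "((\<lambda>\<gamma>. of_real \<gamma> / (of_real \<gamma> * a \<gamma> - 1)) \<longlongrightarrow> of_real 0 / (of_real 0 * a0 - 1)) (at (0::real))"
    by (intro tendsto_intros lim) auto
  have l2: "((\<lambda>\<gamma>. of_real \<gamma> / (of_real \<gamma> * a \<gamma> + 1)) \<longlongrightarrow> of_real 0 / (of_real 0 * a0 + 1)) (at (0::real))"
    by (intro tendsto_intros lim) auto
  have e1: "\<forall>\<^sub>F \<gamma> in at (0::real). of_real \<gamma> / (of_real \<gamma> * a \<gamma> - 1) = inverse (a \<gamma> - of_real (1/\<gamma>))"
    unfolding eventually_at_filter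
  proof (intro always_eventually allI impI)
    fix \<gamma> :: real assume "\<gamma> \<noteq> 0"
    then have "a \<gamma> - of_real (1/\<gamma>) = (of_real \<gamma> * a \<gamma> - 1) / of_real \<gamma>"
      by (simp add: field_simps)
    then show "of_real \<gamma> / (of_real \<gamma> * a \<gamma> - 1) = inverse (a \<gamma> - of_real (1/\<gamma>))"
      by (simp add: inverse_divide)
  qed
  have e2: "\<forall>\<^sub>F \<gamma> in at (0::real). of_real \<gamma> / (of_real \<gamma> * a \<gamma> + 1) = inverse (a \<gamma> + of_real (1/\<gamma>))"
    unfolding eventually_at_filter
  proof (intro always_eventually allI impI)
    fix \<gamma> :: real assume "\<gamma> \<noteq> 0"
    then have "a \<gamma> + of_real (1/\<gamma>) = (of_real \<gamma> * a \<gamma> + 1) / of_real \<gamma>"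
      by (simp add: field_simps)
    then show "of_real \<gamma> / (of_real \<gamma> * a \<gamma> + 1) = inverse (a \<gamma> + of_real (1/\<gamma>))"
      by (simp add: inverse_divide)
  qed
  show "((\<lambda>\<gamma>. inverse (a \<gamma> - of_real (1/\<gamma>))) \<longlongrightarrow> 0) (at 0)"
    using tendsto_cong[OF e1] l1 by simp
  show "((\<lambda>\<gamma>. inverse (a \<gamma> + of_real (1/\<gamma>))) \<longlongrightarrow> 0) (at 0)"
    using tendsto_cong[OF e2] l2 by simp
qed

lemma quad_inv: "quad_charge S m z K w c = (\<Sum>\<alpha>\<in>S. \<Sum>p<m \<alpha>. \<Sum>\<beta>\<in>S. \<Sum>q<m \<beta>.
    K \<alpha> p \<beta> q c * inverse (w - z \<alpha>)^(p+1) * inverse (w - z \<beta>)^(q+1))"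
  unfolding quad_charge_def
  by (intro sum.cong refl) (simp add: divide_inverse power_inverse mult.assoc)

lemma block_lim:
  fixes F :: "real filter" and pos :: "real \<Rightarrow> 's \<Rightarrow> complex" and w :: "real \<Rightarrow> complex"
  assumes fin: "finite U" and TU: "T \<subseteq> U"
    and lim: "\<And>\<alpha>. \<alpha> \<in> U \<Longrightarrow> ((\<lambda>\<gamma>. inverse (w \<gamma> - pos \<gamma> \<alpha>)) \<longlongrightarrow> (if \<alpha> \<in> T then inverse (x0 - z \<alpha>) else 0)) F"
  shows "((\<lambda>\<gamma>. quad_charge U m (pos \<gamma>) K (w \<gamma>) c) \<longlongrightarrow> quad_charge T m z K x0 c) F"
    and "((\<lambda>\<gamma>. Dform U m l (pos \<gamma>) (w \<gamma>)) \<longlongrightarrow> Dform T m l z x0) F"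
proof -
  define L where "L \<alpha> = (if \<alpha> \<in> T then inverse (x0 - z \<alpha>) else 0)" for \<alpha>
  have lim': "\<And>\<alpha>. \<alpha> \<in> U \<Longrightarrow> ((\<lambda>\<gamma>. inverse (w \<gamma> - pos \<gamma> \<alpha>)) \<longlongrightarrow> L \<alpha>) F"
    using lim unfolding L_def by blast
  have q1: "((\<lambda>\<gamma>. quad_charge U m (pos \<gamma>) K (w \<gamma>) c) \<longlongrightarrow>
      (\<Sum>\<alpha>\<in>U. \<Sum>p<m \<alpha>. \<Sum>\<beta>\<in>U. \<Sum>q<m \<beta>. K \<alpha> p \<beta> q c * L \<alpha>^(p+1) * L \<beta>^(q+1))) F"
    unfolding quad_inv by (intro tendsto_sum tendsto_mult tendsto_power tendsto_const lim')
  have q2: "(\<Sum>\<alpha>\<in>U. \<Sum>p<m \<alpha>. \<Sum>\<beta>\<in>U. \<Sum>q<m \<beta>. K \<alpha> p \<beta> q c * L \<alpha>^(p+1) * L \<beta>^(q+1))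
      = quad_charge T m z K x0 c"
  proof -
    have "(\<Sum>\<alpha>\<in>U. \<Sum>p<m \<alpha>. \<Sum>\<beta>\<in>U. \<Sum>q<m \<beta>. K \<alpha> p \<beta> q c * L \<alpha>^(p+1) * L \<beta>^(q+1))
        = (\<Sum>\<alpha>\<in>T. \<Sum>p<m \<alpha>. \<Sum>\<beta>\<in>U. \<Sum>q<m \<beta>. K \<alpha> p \<beta> q c * L \<alpha>^(p+1) * L \<beta>^(q+1))"
      by (rule sum.mono_neutral_right[OF fin TU]) (auto simp: L_def)
    also have "\<dots> = (\<Sum>\<alpha>\<in>T. \<Sum>p<m \<alpha>. \<Sum>\<beta>\<in>T. \<Sum>q<m \<beta>. K \<alpha> p \<beta> q c * L \<alpha>^(p+1) * L \<beta>^(q+1))"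
      by (intro sum.cong refl sum.mono_neutral_right[OF fin TU]) (auto simp: L_def)
    also have "\<dots> = quad_charge T m z K x0 c"
      unfolding quad_inv using TU by (intro sum.cong refl) (auto simp: L_def)
    finally show ?thesis .
  qed
  show "((\<lambda>\<gamma>. quad_charge U m (pos \<gamma>) K (w \<gamma>) c) \<longlongrightarrow> quad_charge T m z K x0 c) F"
    using q1 q2 by simp
  have d1: "((\<lambda>\<gamma>. Dform U m l (pos \<gamma>) (w \<gamma>)) \<longlongrightarrow>
      (\<Sum>\<alpha>\<in>U. \<Sum>p<m \<alpha>. - (of_nat (Suc p)) * l \<alpha> p * L \<alpha> ^ (p+2))) F"
    unfolding Dform_def by (intro tendsto_sum tendsto_mult tendsto_power tendsto_const lim')
  have d2: "(\<Sum>\<alpha>\<in>U. \<Sum>p<m \<alpha>. - (of_nat (Suc p)) * l \<alpha> p * L \<alpha> ^ (p+2)) = Dform T m l z x0"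
  proof -
    have "(\<Sum>\<alpha>\<in>U. \<Sum>p<m \<alpha>. - (of_nat (Suc p)) * l \<alpha> p * L \<alpha> ^ (p+2))
        = (\<Sum>\<alpha>\<in>T. \<Sum>p<m \<alpha>. - (of_nat (Suc p)) * l \<alpha> p * L \<alpha> ^ (p+2))"
      by (rule sum.mono_neutral_right[OF fin TU]) (auto simp: L_def)
    also have "\<dots> = Dform T m l z x0"
      unfolding Dform_def using TU by (intro sum.cong refl) (auto simp: L_def)
    finally show ?thesis .
  qed
  show "((\<lambda>\<gamma>. Dform U m l (pos \<gamma>) (w \<gamma>)) \<longlongrightarrow> Dform T m l z x0) F"
    using d1 d2 by simp
qed

lemma LC_lim:
  fixes F :: "real filter" and pos :: "real \<Rightarrow> 's \<Rightarrow> complex" and w :: "real \<Rightarrow> complex"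
  assumes fin: "finite U" and TU: "T \<subseteq> U"
    and lim: "\<And>\<alpha>. \<alpha> \<in> U \<Longrightarrow> ((\<lambda>\<gamma>. inverse (w \<gamma> - pos \<gamma> \<alpha>)) \<longlongrightarrow> (if \<alpha> \<in> T then inverse (x0 - z \<alpha>) else 0)) F"
    and ev: "\<forall>\<^sub>F \<gamma> in F. w \<gamma> \<notin> pos \<gamma> ` U"
    and x0: "x0 \<notin> z ` T"
    and d0: "deriv (twist T m l z linf) x0 \<noteq> 0"
  shows "((\<lambda>\<gamma>. local_charge U m l (pos \<gamma>) linf K (w \<gamma>) c) \<longlongrightarrow> local_charge T m l z linf K x0 c) F"
proof -
  have finT: "finite T" using fin TU finite_subset by blast
  have D: "deriv (twist T m l z linf) x0 = Dform T m l z x0" by (rule deriv_twist[OF finT x0])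
  have ev2: "\<forall>\<^sub>F \<gamma> in F. - (1 / (2 * Dform U m l (pos \<gamma>) (w \<gamma>))) * quad_charge U m (pos \<gamma>) K (w \<gamma>) c
      = local_charge U m l (pos \<gamma>) linf K (w \<gamma>) c"
    using ev by eventually_elim (simp add: local_charge_def deriv_twist[OF fin])
  have "((\<lambda>\<gamma>. - (1 / (2 * Dform U m l (pos \<gamma>) (w \<gamma>))) * quad_charge U m (pos \<gamma>) K (w \<gamma>) c)
     \<longlongrightarrow> - (1 / (2 * Dform T m l z x0)) * quad_charge T m z K x0 c) F"
    using d0 D by (intro tendsto_intros block_lim[OF fin TU lim]) auto
  then have "((\<lambda>\<gamma>. local_charge U m l (pos \<gamma>) linf K (w \<gamma>) c) \<longlongrightarrow> - (1 / (2 * Dform T m l z x0)) * quad_charge T m z K x0 c) F"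
    using tendsto_cong[OF ev2] by simp
  then show ?thesis unfolding local_charge_def D .
qed

lemma pos_lower:
  assumes "finite A" "\<And>x. x \<in> A \<Longrightarrow> (0::real) < f x"
  shows "\<exists>r>0. \<forall>x\<in>A. r \<le> f x"
proof (cases "A = {}")
  case True then show ?thesis by (intro exI[of _ 1]) auto
next
  case False
  have "Min (f ` A) > 0" using assms False by (subst Min_gr_iff) auto
  moreover have "\<forall>x\<in>A. Min (f ` A) \<le> f x" using assms(1) by auto
  ultimately show ?thesis by blast
qed

lemma ev_big: "\<forall>\<^sub>F \<gamma> in at (0::real). K \<le> norm (complex_of_real (1/\<gamma>))"
proof -
  have "\<exists>d>0. \<forall>x\<in>UNIV. x \<noteq> 0 \<and> dist x (0::real) < d \<longrightarrow> K \<le> norm (complex_of_real (1/x))"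
  proof (intro exI[of _ "inverse (\<bar>K\<bar> + 1)"] conjI ballI impI)
    show "0 < inverse (\<bar>K\<bar> + 1)" by simp
    fix x :: real assume h: "x \<noteq> 0 \<and> dist x 0 < inverse (\<bar>K\<bar> + 1)"
    then have a: "\<bar>x\<bar> < inverse (\<bar>K\<bar> + 1)" "0 < \<bar>x\<bar>" by auto
    have "inverse (inverse (\<bar>K\<bar> + 1)) < inverse \<bar>x\<bar>"
      by (rule less_imp_inverse_less[OF a])
    then have "\<bar>K\<bar> + 1 < inverse \<bar>x\<bar>" by simp
    moreover have "norm (complex_of_real (1/x)) = inverse \<bar>x\<bar>"
      by (simp only: norm_of_real abs_divide abs_one divide_inverse mult_1 abs_inverse)
    ultimately show "K \<le> norm (complex_of_real (1/x))" by linarith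
  qed
  then show ?thesis by (simp only: eventually_at)
qed

lemma mixed_dist: "norm (c::complex) - norm a - norm b \<le> dist a (b + c)"
proof -
  have "norm c = norm ((b + c - a) + (a - b))" by simp
  also have "\<dots> \<le> norm (b + c - a) + norm (a - b)" by (rule norm_triangle_ineq)
  also have "norm (a - b) \<le> norm a + norm b" by (rule norm_triangle_ineq4)
  finally have "norm c \<le> norm (b + c - a) + (norm a + norm b)" by simp
  moreover have "dist a (b + c) = norm (b + c - a)" by (simp add: dist_norm norm_minus_commute)
  ultimately show ?thesis by linarith
qed

theorem theorem2p1:
  fixes S1 S2 :: "'s set"
    and sig :: "'s \<Rightarrow> 's"
    and m :: "'s \<Rightarrow> nat"
    and l :: "'s \<Rightarrow> nat \<Rightarrow> complex"
    and z :: "'s \<Rightarrow> complex"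
    and linf :: real
    and K :: "'s \<Rightarrow> nat \<Rightarrow> 's \<Rightarrow> nat \<Rightarrow> 'c \<Rightarrow> complex"
    and \<zeta>1 \<zeta>2 :: "nat \<Rightarrow> complex"
    and \<epsilon> :: "nat \<Rightarrow> complex"
  defines "M1 \<equiv> total_mult S1 m"
    and "M \<equiv> total_mult S1 m + total_mult S2 m"
  assumes real1: "realisation S1 sig m l z"
    and real2: "realisation S2 sig m l z"
    and disj: "S1 \<inter> S2 = {}"
    and linf: "linf \<noteq> 0"
    and Ksym: "\<And>\<alpha> p \<beta> q c. K \<alpha> p \<beta> q c = K \<beta> q \<alpha> p c"
    and zeros1: "bij_betw \<zeta>1 {1..M1} (twist_zeros S1 m l z linf)"
    and simple1: "\<And>i. i \<in> {1..M1} \<Longrightarrow> deriv (twist S1 m l z linf) (\<zeta>1 i) \<noteq> 0"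
    and zeros2: "bij_betw \<zeta>2 {M1<..M} (twist_zeros S2 m l z linf)"
    and simple2: "\<And>i. i \<in> {M1<..M} \<Longrightarrow> deriv (twist S2 m l z linf) (\<zeta>2 i) \<noteq> 0"
  shows
    "(\<exists>\<delta>>0. \<exists>\<zeta>::real \<Rightarrow> nat \<Rightarrow> complex.
        (\<forall>\<gamma>. \<gamma> \<noteq> 0 \<and> \<bar>\<gamma>\<bar> < \<delta> \<longrightarrow>
           bij_betw (\<zeta> \<gamma>) {1..M} (twist_zeros (S1 \<union> S2) m l (coupled_pos S1 z \<gamma>) linf) \<and>
           (\<forall>i\<in>{1..M}. deriv (twist (S1 \<union> S2) m l (coupled_pos S1 z \<gamma>) linf) (\<zeta> \<gamma> i) \<noteq> 0)) \<and>
        (\<forall>i\<in>{1..M1}. ((\<lambda>\<gamma>. \<zeta> \<gamma> i) \<longlongrightarrow> \<zeta>1 i) (at (0::real))) \<and>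
        (\<forall>i\<in>{M1<..M}. ((\<lambda>\<gamma>. \<zeta> \<gamma> i - complex_of_real (1 / \<gamma>)) \<longlongrightarrow> \<zeta>2 i) (at (0::real))))
   \<and>
    (\<forall>\<delta>>0. \<forall>\<zeta>::real \<Rightarrow> nat \<Rightarrow> complex.
        ((\<forall>\<gamma>. \<gamma> \<noteq> 0 \<and> \<bar>\<gamma>\<bar> < \<delta> \<longrightarrow>
           bij_betw (\<zeta> \<gamma>) {1..M} (twist_zeros (S1 \<union> S2) m l (coupled_pos S1 z \<gamma>) linf)) \<and>
         (\<forall>i\<in>{1..M1}. ((\<lambda>\<gamma>. \<zeta> \<gamma> i) \<longlongrightarrow> \<zeta>1 i) (at (0::real))) \<and>
         (\<forall>i\<in>{M1<..M}. ((\<lambda>\<gamma>. \<zeta> \<gamma> i - complex_of_real (1 / \<gamma>)) \<longlongrightarrow> \<zeta>2 i) (at (0::real))))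
        \<longrightarrow> (\<forall>c. ((\<lambda>\<gamma>. \<Sum>i\<in>{1..M}. \<epsilon> i *
                  local_charge (S1 \<union> S2) m l (coupled_pos S1 z \<gamma>) linf K (\<zeta> \<gamma> i) c)
               \<longlongrightarrow> (\<Sum>i\<in>{1..M1}. \<epsilon> i * local_charge S1 m l z linf K (\<zeta>1 i) c)
                 + (\<Sum>i\<in>{M1<..M}. \<epsilon> i * local_charge S2 m l z linf K (\<zeta>2 i) c))
             (at (0::real))))"
proof -
  have fin1: "finite S1" using real1 unfolding realisation_def by (rule conjunct1)
  have fin2: "finite S2" using real2 unfolding realisation_def by (rule conjunct1)
  have finU: "finite (S1 \<union> S2)" using fin1 fin2 by simp
  have M1M: "M1 \<le> M" unfolding M1_def M_def by simp
  have Iun: "{1..M} = {1..M1} \<union> {M1<..M}" using M1M by auto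
  have Idisj: "{1..M1} \<inter> {M1<..M} = {}" by auto
  have Mtot: "total_mult (S1 \<union> S2) m = M"
    unfolding M_def total_mult_def using sum.union_disjoint[OF fin1 fin2 disj] by simp
  have Z1: "\<zeta>1 i \<notin> z ` S1 \<and> twist S1 m l z linf (\<zeta>1 i) = 0" if "i \<in> {1..M1}" for i
    using bij_betw_apply[OF zeros1 that] unfolding twist_zeros_def by auto
  have Z1': "\<exists>j\<in>{1..M1}. w = \<zeta>1 j" if "w \<in> twist_zeros S1 m l z linf" for w
    using zeros1 that unfolding bij_betw_def by auto
  have inj1: "inj_on \<zeta>1 {1..M1}" using zeros1 unfolding bij_betw_def by auto
  have Z2: "\<zeta>2 i \<notin> z ` S2 \<and> twist S2 m l z linf (\<zeta>2 i) = 0" if "i \<in> {M1<..M}" for i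
    using bij_betw_apply[OF zeros2 that] unfolding twist_zeros_def by auto
  have Z2': "\<exists>j\<in>{M1<..M}. w = \<zeta>2 j" if "w \<in> twist_zeros S2 m l z linf" for w
    using zeros2 that unfolding bij_betw_def by auto
  have inj2: "inj_on \<zeta>2 {M1<..M}" using zeros2 unfolding bij_betw_def by auto

  define Zc where "Zc \<gamma> = twist_zeros (S1 \<union> S2) m l (coupled_pos S1 z \<gamma>) linf" for \<gamma>
  define Ctr where "Ctr \<gamma> i = (if i \<le> M1 then \<zeta>1 i else \<zeta>2 i + complex_of_real (1/\<gamma>))" for \<gamma> i

  define A1 where "A1 = {(i,j). i \<in> {1..M1} \<and> j \<in> {1..M1} \<and> i \<noteq> j}"
  define A2 where "A2 = {(i,j). i \<in> {M1<..M} \<and> j \<in> {M1<..M} \<and> i \<noteq> j}"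
  define f1 where "f1 x = dist (\<zeta>1 (fst x)) (\<zeta>1 (snd x))" for x
  define f2 where "f2 x = dist (\<zeta>2 (fst x)) (\<zeta>2 (snd x))" for x
  define f3 where "f3 x = dist (\<zeta>1 (fst x)) (z (snd x))" for x
  define f4 where "f4 x = dist (\<zeta>2 (fst x)) (z (snd x))" for x
  have fa1: "finite A1" unfolding A1_def by (rule finite_subset[of _ "{1..M1} \<times> {1..M1}"]) auto
  have fa2: "finite A2" unfolding A2_def by (rule finite_subset[of _ "{M1<..M} \<times> {M1<..M}"]) auto
  have fa3: "finite ({1..M1} \<times> S1)" using fin1 by simp
  have fa4: "finite ({M1<..M} \<times> S2)" using fin2 by simp
  have pa1: "0 < f1 x" if xA: "x \<in> A1" for x
  proof -
    obtain i j where ij: "x = (i,j)" "i \<in> {1..M1}" "j \<in> {1..M1}" "i \<noteq> j" using xA unfolding A1_def by blast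
    then have "\<zeta>1 i \<noteq> \<zeta>1 j" using inj_on_eq_iff[OF inj1 ij(2,3)] by simp
    then show ?thesis unfolding f1_def ij(1) by simp
  qed
  have pa2: "0 < f2 x" if xA: "x \<in> A2" for x
  proof -
    obtain i j where ij: "x = (i,j)" "i \<in> {M1<..M}" "j \<in> {M1<..M}" "i \<noteq> j" using xA unfolding A2_def by blast
    then have "\<zeta>2 i \<noteq> \<zeta>2 j" using inj_on_eq_iff[OF inj2 ij(2,3)] by simp
    then show ?thesis unfolding f2_def ij(1) by simp
  qed
  have pa3: "0 < f3 x" if "x \<in> {1..M1} \<times> S1" for x
  proof -
    have "fst x \<in> {1..M1}" "snd x \<in> S1" using that by (auto simp: mem_Times_iff)
    then show ?thesis using Z1[of "fst x"] unfolding f3_def by auto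
  qed
  have pa4: "0 < f4 x" if "x \<in> {M1<..M} \<times> S2" for x
  proof -
    have "fst x \<in> {M1<..M}" "snd x \<in> S2" using that by (auto simp: mem_Times_iff)
    then show ?thesis using Z2[of "fst x"] unfolding f4_def by auto
  qed
  obtain a1 where a1: "a1 > 0" "\<forall>x\<in>A1. a1 \<le> f1 x" using pos_lower[of A1 f1, OF fa1 pa1] by blast
  obtain a2 where a2: "a2 > 0" "\<forall>x\<in>A2. a2 \<le> f2 x" using pos_lower[of A2 f2, OF fa2 pa2] by blast
  obtain a3 where a3: "a3 > 0" "\<forall>x\<in>{1..M1} \<times> S1. a3 \<le> f3 x" using pos_lower[of _ f3, OF fa3 pa3] by blast
  obtain a4 where a4: "a4 > 0" "\<forall>x\<in>{M1<..M} \<times> S2. a4 \<le> f4 x" using pos_lower[of _ f4, OF fa4 pa4] by blast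
  define r0 where "r0 = min (min a1 a2) (min a3 a4) / 3"
  have r0: "r0 > 0" unfolding r0_def using a1 a2 a3 a4 by simp
  have sep1: "3 * r0 \<le> dist (\<zeta>1 i) (\<zeta>1 j)" if "i \<in> {1..M1}" "j \<in> {1..M1}" "i \<noteq> j" for i j
  proof -
    have "(i,j) \<in> A1" using that unfolding A1_def by simp
    then have "a1 \<le> dist (\<zeta>1 i) (\<zeta>1 j)" using a1(2) unfolding f1_def by fastforce
    then show ?thesis unfolding r0_def by linarith
  qed
  have sep2: "3 * r0 \<le> dist (\<zeta>2 i) (\<zeta>2 j)" if "i \<in> {M1<..M}" "j \<in> {M1<..M}" "i \<noteq> j" for i j
  proof -
    have "(i,j) \<in> A2" using that unfolding A2_def by simp
    then have "a2 \<le> dist (\<zeta>2 i) (\<zeta>2 j)" using a2(2) unfolding f2_def by fastforce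
    then show ?thesis unfolding r0_def by linarith
  qed
  have pol1: "3 * r0 \<le> dist (\<zeta>1 i) (z \<alpha>)" if "i \<in> {1..M1}" "\<alpha> \<in> S1" for i \<alpha>
  proof -
    have "(i,\<alpha>) \<in> {1..M1} \<times> S1" using that by simp
    then have "a3 \<le> dist (\<zeta>1 i) (z \<alpha>)" using a3(2) unfolding f3_def by fastforce
    then show ?thesis unfolding r0_def by linarith
  qed
  have pol2: "3 * r0 \<le> dist (\<zeta>2 i) (z \<alpha>)" if "i \<in> {M1<..M}" "\<alpha> \<in> S2" for i \<alpha>
  proof -
    have "(i,\<alpha>) \<in> {M1<..M} \<times> S2" using that by simp
    then have "a4 \<le> dist (\<zeta>2 i) (z \<alpha>)" using a4(2) unfolding f4_def by fastforce
    then show ?thesis unfolding r0_def by linarith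
  qed

  have good: "\<forall>\<^sub>F \<gamma> in at (0::real). \<forall>i\<in>{1..M}. \<exists>w\<in>ball (Ctr \<gamma> i) r. w \<in> Zc \<gamma>"
    if r: "0 < r" "r \<le> r0" for r
  proof -
    have "\<forall>\<^sub>F \<gamma> in at (0::real). \<exists>w\<in>ball (Ctr \<gamma> i) r. w \<in> Zc \<gamma>" if i: "i \<in> {1..M}" for i
    proof (cases "i \<le> M1")
      case True
      then have iI1: "i \<in> {1..M1}" using i by auto
      have disjc: "w \<noteq> z \<alpha>" if "\<alpha> \<in> S1" "w \<in> cball (\<zeta>1 i) r" for \<alpha> w
        using pol1[OF iI1 that(1)] that(2) r r0 by auto
      have nzs: "twist S1 m l z linf w \<noteq> 0" if w: "w \<in> sphere (\<zeta>1 i) r" for w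
      proof
        assume t0: "twist S1 m l z linf w = 0"
        have "w \<in> cball (\<zeta>1 i) r" using w by simp
        then have "w \<notin> z ` S1" using disjc by blast
        then have "w \<in> twist_zeros S1 m l z linf" using t0 by (simp add: twist_zeros_def)
        then obtain j where j: "j \<in> {1..M1}" "w = \<zeta>1 j" using Z1' by blast
        then have "j \<noteq> i" using w r by auto
        then have "3 * r0 \<le> dist (\<zeta>1 i) (\<zeta>1 j)" using sep1 iI1 j by auto
        then show False using w j r r0 by simp
      qed
      obtain T where T: "T > 0" "\<forall>s. T \<le> norm s \<longrightarrow> (\<exists>u\<in>ball (\<zeta>1 i) r.
          twist S1 m l z linf u + (twist S2 m l z linf (u + s) + of_real linf) = 0 \<and> (\<forall>\<beta>\<in>S2. u + s \<noteq> z \<beta>))"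
        using local_zero[OF fin1 fin2 r(1) disjc nzs conjunct2[OF Z1[OF iI1]]] by blast
      have "\<forall>\<^sub>F \<gamma> in at (0::real). T \<le> norm (complex_of_real (1/\<gamma>))" by (rule ev_big)
      then show ?thesis
      proof eventually_elim
        case (elim \<gamma>)
        then have "T \<le> norm (- complex_of_real (1/\<gamma>))" by simp
        then obtain u where u: "u \<in> ball (\<zeta>1 i) r"
          "twist S1 m l z linf u + (twist S2 m l z linf (u + - complex_of_real (1/\<gamma>)) + of_real linf) = 0"
          "\<forall>\<beta>\<in>S2. u + - complex_of_real (1/\<gamma>) \<noteq> z \<beta>"
          using T(2) by blast
        have "twist (S1 \<union> S2) m l (coupled_pos S1 z \<gamma>) linf u = 0"
          using u(2) coupled_decomp[OF fin1 fin2 disj, of m l z \<gamma> linf u] by simp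
        moreover have "u \<in> cball (\<zeta>1 i) r" using u(1) by (rule mem_ball_imp_mem_cball)
        then have "u \<notin> z ` S1" using disjc by blast
        moreover have "u - complex_of_real (1/\<gamma>) \<notin> z ` S2" using u(3) by auto
        ultimately have "u \<in> Zc \<gamma>" unfolding Zc_def twist_zeros_def
          using coupled_pole_iff[OF disj, of u z \<gamma>] by blast
        moreover have "Ctr \<gamma> i = \<zeta>1 i" using True by (simp add: Ctr_def)
        ultimately show ?case using u(1) by auto
      qed
    next
      case False
      then have iI2: "i \<in> {M1<..M}" using i by auto
      have disjc: "w \<noteq> z \<alpha>" if "\<alpha> \<in> S2" "w \<in> cball (\<zeta>2 i) r" for \<alpha> w
        using pol2[OF iI2 that(1)] that(2) r r0 by auto
      have nzs: "twist S2 m l z linf w \<noteq> 0" if w: "w \<in> sphere (\<zeta>2 i) r" for w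
      proof
        assume t0: "twist S2 m l z linf w = 0"
        have "w \<in> cball (\<zeta>2 i) r" using w by simp
        then have "w \<notin> z ` S2" using disjc by blast
        then have "w \<in> twist_zeros S2 m l z linf" using t0 by (simp add: twist_zeros_def)
        then obtain j where j: "j \<in> {M1<..M}" "w = \<zeta>2 j" using Z2' by blast
        then have "j \<noteq> i" using w r by auto
        then have "3 * r0 \<le> dist (\<zeta>2 i) (\<zeta>2 j)" using sep2 iI2 j by auto
        then show False using w j r r0 by simp
      qed
      obtain T where T: "T > 0" "\<forall>s. T \<le> norm s \<longrightarrow> (\<exists>u\<in>ball (\<zeta>2 i) r.
          twist S2 m l z linf u + (twist S1 m l z linf (u + s) + of_real linf) = 0 \<and> (\<forall>\<beta>\<in>S1. u + s \<noteq> z \<beta>))"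
        using local_zero[OF fin2 fin1 r(1) disjc nzs conjunct2[OF Z2[OF iI2]]] by blast
      have "\<forall>\<^sub>F \<gamma> in at (0::real). T \<le> norm (complex_of_real (1/\<gamma>))" by (rule ev_big)
      then show ?thesis
      proof eventually_elim
        case (elim \<gamma>)
        let ?c = "complex_of_real (1/\<gamma>)"
        obtain u where u: "u \<in> ball (\<zeta>2 i) r"
          "twist S2 m l z linf u + (twist S1 m l z linf (u + ?c) + of_real linf) = 0"
          "\<forall>\<beta>\<in>S1. u + ?c \<noteq> z \<beta>"
          using T(2) elim by blast
        have "twist (S1 \<union> S2) m l (coupled_pos S1 z \<gamma>) linf (u + ?c)
            = twist S2 m l z linf u + (twist S1 m l z linf (u + ?c) + of_real linf)"
          using coupled_decomp[OF fin1 fin2 disj, of m l z \<gamma> linf "u + ?c"] by (simp add: ac_simps)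
        then have "twist (S1 \<union> S2) m l (coupled_pos S1 z \<gamma>) linf (u + ?c) = 0" using u(2) by simp
        moreover have "u + ?c \<notin> z ` S1" using u(3) by auto
        moreover have "u \<in> cball (\<zeta>2 i) r" using u(1) by (rule mem_ball_imp_mem_cball)
        then have "u + ?c - ?c \<notin> z ` S2" using disjc by auto
        ultimately have "u + ?c \<in> Zc \<gamma>" unfolding Zc_def twist_zeros_def
          using coupled_pole_iff[OF disj, of "u + ?c" z \<gamma>] by blast
        moreover have "Ctr \<gamma> i = \<zeta>2 i + ?c" using False by (simp add: Ctr_def)
        moreover have "u + ?c \<in> ball (\<zeta>2 i + ?c) r" using u(1) by (simp add: dist_norm)
        ultimately show ?case by auto
      qed
    qed
    then show ?thesis by (intro eventually_ball_finite) auto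
  qed

  have sep: "\<forall>\<^sub>F \<gamma> in at (0::real). \<forall>i\<in>{1..M}. \<forall>j\<in>{1..M}. i \<noteq> j \<longrightarrow> 3 * r0 \<le> dist (Ctr \<gamma> i) (Ctr \<gamma> j)"
  proof -
    define K0 where "K0 = 3 * r0 + (\<Sum>i\<in>{1..M1}. norm (\<zeta>1 i)) + (\<Sum>j\<in>{M1<..M}. norm (\<zeta>2 j))"
    have n1: "norm (\<zeta>1 i) \<le> (\<Sum>i\<in>{1..M1}. norm (\<zeta>1 i))" if "i \<in> {1..M1}" for i
      using that by (intro member_le_sum) auto
    have n2: "norm (\<zeta>2 i) \<le> (\<Sum>i\<in>{M1<..M}. norm (\<zeta>2 i))" if "i \<in> {M1<..M}" for i
      using that by (intro member_le_sum) auto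
    have s0: "0 \<le> (\<Sum>i\<in>{1..M1}. norm (\<zeta>1 i))" "0 \<le> (\<Sum>i\<in>{M1<..M}. norm (\<zeta>2 i))"
      by (auto intro: sum_nonneg)
    have "\<forall>\<^sub>F \<gamma> in at (0::real). K0 \<le> norm (complex_of_real (1/\<gamma>))" by (rule ev_big)
    then show ?thesis
    proof eventually_elim
      case (elim \<gamma>)
      let ?c = "complex_of_real (1/\<gamma>)"
      have mix: "3 * r0 \<le> dist (\<zeta>1 i) (\<zeta>2 j + ?c)" if "i \<in> {1..M1}" "j \<in> {M1<..M}" for i j
        using mixed_dist[of ?c "\<zeta>1 i" "\<zeta>2 j"] n1[OF that(1)] n2[OF that(2)] s0 elim
        unfolding K0_def by linarith
      show ?case
      proof (intro ballI impI)
        fix i j assume i: "i \<in> {1..M}" and j: "j \<in> {1..M}" and ij: "i \<noteq> j"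
        show "3 * r0 \<le> dist (Ctr \<gamma> i) (Ctr \<gamma> j)"
        proof (cases "i \<le> M1"; cases "j \<le> M1")
          assume "i \<le> M1" "j \<le> M1"
          then show ?thesis using sep1[of i j] i j ij by (simp add: Ctr_def)
        next
          assume "i \<le> M1" "\<not> j \<le> M1"
          then show ?thesis using mix[of i j] i j by (simp add: Ctr_def)
        next
          assume "\<not> i \<le> M1" "j \<le> M1"
          then show ?thesis using mix[of j i] i j by (simp add: Ctr_def dist_commute)
        next
          assume "\<not> i \<le> M1" "\<not> j \<le> M1"
          then have "dist (Ctr \<gamma> i) (Ctr \<gamma> j) = dist (\<zeta>2 i) (\<zeta>2 j)" by (simp add: Ctr_def dist_norm)
          then show ?thesis using sep2[of i j] i j ij \<open>\<not> i \<le> M1\<close> \<open>\<not> j \<le> M1\<close> by simp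
        qed
      qed
    qed
  qed

  define \<zeta> where "\<zeta> \<gamma> i = (SOME w. w \<in> ball (Ctr \<gamma> i) r0 \<and> w \<in> Zc \<gamma>)" for \<gamma> i

  have key: "(\<forall>i\<in>{1..M}. \<zeta> \<gamma> i \<in> ball (Ctr \<gamma> i) r0 \<and> \<zeta> \<gamma> i \<in> Zc \<gamma>) \<and> bij_betw (\<zeta> \<gamma>) {1..M} (Zc \<gamma>) \<and>
       (\<forall>i\<in>{1..M}. deriv (twist (S1 \<union> S2) m l (coupled_pos S1 z \<gamma>) linf) (\<zeta> \<gamma> i) \<noteq> 0) \<and>
       (\<forall>i\<in>{1..M}. \<forall>w. w \<in> Zc \<gamma> \<and> w \<in> ball (Ctr \<gamma> i) r0 \<longrightarrow> w = \<zeta> \<gamma> i)"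
    if G: "\<forall>i\<in>{1..M}. \<exists>w\<in>ball (Ctr \<gamma> i) r0. w \<in> Zc \<gamma>"
      and Sp: "\<forall>i\<in>{1..M}. \<forall>j\<in>{1..M}. i \<noteq> j \<longrightarrow> 3 * r0 \<le> dist (Ctr \<gamma> i) (Ctr \<gamma> j)" for \<gamma>
  proof -
    have A: "\<zeta> \<gamma> i \<in> ball (Ctr \<gamma> i) r0 \<and> \<zeta> \<gamma> i \<in> Zc \<gamma>" if "i \<in> {1..M}" for i
    proof -
      have "\<exists>w. w \<in> ball (Ctr \<gamma> i) r0 \<and> w \<in> Zc \<gamma>" using G that by blast
      then show ?thesis unfolding \<zeta>_def by (rule someI_ex)
    qed
    have far: "i = j" if "i \<in> {1..M}" "j \<in> {1..M}" "w \<in> ball (Ctr \<gamma> i) r0" "w \<in> ball (Ctr \<gamma> j) r0" for i j w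
    proof (rule ccontr)
      assume "i \<noteq> j"
      then have "3 * r0 \<le> dist (Ctr \<gamma> i) (Ctr \<gamma> j)" using Sp that by auto
      moreover have "dist (Ctr \<gamma> i) (Ctr \<gamma> j) \<le> dist (Ctr \<gamma> i) w + dist w (Ctr \<gamma> j)" by (rule dist_triangle)
      moreover have "dist (Ctr \<gamma> i) w < r0" "dist w (Ctr \<gamma> j) < r0" using that by (auto simp: dist_commute)
      ultimately show False using r0 by linarith
    qed
    have inj: "inj_on (\<zeta> \<gamma>) {1..M}"
    proof (rule inj_onI)
      fix i j assume ij: "i \<in> {1..M}" "j \<in> {1..M}" "\<zeta> \<gamma> i = \<zeta> \<gamma> j"
      show "i = j" using far[OF ij(1,2), of "\<zeta> \<gamma> i"] A[OF ij(1)] A[OF ij(2)] ij(3) by simp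
    qed
    have sub: "\<zeta> \<gamma> ` {1..M} \<subseteq> Zc \<gamma>" using A by auto
    have finZ: "finite (Zc \<gamma>)" and cardZ: "card (Zc \<gamma>) \<le> M"
      using twist_zeros_card[OF finU linf, of m l "coupled_pos S1 z \<gamma>"] Mtot unfolding Zc_def by auto
    have cardI: "card (\<zeta> \<gamma> ` {1..M}) = M" using card_image[OF inj] by simp
    have "card (\<zeta> \<gamma> ` {1..M}) = card (Zc \<gamma>)" using card_mono[OF finZ sub] cardI cardZ by linarith
    then have eq: "\<zeta> \<gamma> ` {1..M} = Zc \<gamma>" using card_subset_eq[OF finZ sub] by blast
    have bij: "bij_betw (\<zeta> \<gamma>) {1..M} (Zc \<gamma>)" unfolding bij_betw_def using inj eq by simp
    have cM: "total_mult (S1 \<union> S2) m \<le> card (twist_zeros (S1 \<union> S2) m l (coupled_pos S1 z \<gamma>) linf)"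
      using Mtot cardI eq unfolding Zc_def by simp
    have simple: "\<forall>i\<in>{1..M}. deriv (twist (S1 \<union> S2) m l (coupled_pos S1 z \<gamma>) linf) (\<zeta> \<gamma> i) \<noteq> 0"
    proof
      fix i assume "i \<in> {1..M}"
      then have "\<zeta> \<gamma> i \<in> twist_zeros (S1 \<union> S2) m l (coupled_pos S1 z \<gamma>) linf" using A unfolding Zc_def by blast
      then show "deriv (twist (S1 \<union> S2) m l (coupled_pos S1 z \<gamma>) linf) (\<zeta> \<gamma> i) \<noteq> 0"
        by (rule twist_simple[OF finU linf _ cM])
    qed
    have uniq: "\<forall>i\<in>{1..M}. \<forall>w. w \<in> Zc \<gamma> \<and> w \<in> ball (Ctr \<gamma> i) r0 \<longrightarrow> w = \<zeta> \<gamma> i"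
    proof (intro ballI allI impI)
      fix i w assume i: "i \<in> {1..M}" and w: "w \<in> Zc \<gamma> \<and> w \<in> ball (Ctr \<gamma> i) r0"
      then obtain j where j: "j \<in> {1..M}" "w = \<zeta> \<gamma> j" using eq by blast
      then have "i = j" using far[OF i j(1), of w] A[OF j(1)] w by simp
      then show "w = \<zeta> \<gamma> i" using j by simp
    qed
    show ?thesis using A bij simple uniq by blast
  qed

  have evG0: "\<forall>\<^sub>F \<gamma> in at (0::real). (\<forall>i\<in>{1..M}. \<exists>w\<in>ball (Ctr \<gamma> i) r0. w \<in> Zc \<gamma>) \<and>
       (\<forall>i\<in>{1..M}. \<forall>j\<in>{1..M}. i \<noteq> j \<longrightarrow> 3 * r0 \<le> dist (Ctr \<gamma> i) (Ctr \<gamma> j))"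
    using good[OF r0 order_refl] sep by (rule eventually_conj)
  then obtain \<delta> where \<delta>: "\<delta> > 0" "\<And>\<gamma>. \<gamma> \<noteq> 0 \<Longrightarrow> dist \<gamma> 0 < \<delta> \<Longrightarrow>
       (\<forall>i\<in>{1..M}. \<exists>w\<in>ball (Ctr \<gamma> i) r0. w \<in> Zc \<gamma>) \<and>
       (\<forall>i\<in>{1..M}. \<forall>j\<in>{1..M}. i \<noteq> j \<longrightarrow> 3 * r0 \<le> dist (Ctr \<gamma> i) (Ctr \<gamma> j))"
    unfolding eventually_at by blast

  have conv: "((\<lambda>\<gamma>. \<zeta> \<gamma> i - Ctr \<gamma> i) \<longlongrightarrow> 0) (at (0::real))" if i: "i \<in> {1..M}" for i
  proof (rule tendstoI)
    fix e :: real assume e: "e > 0"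
    have "\<forall>\<^sub>F \<gamma> in at (0::real). (\<forall>i\<in>{1..M}. \<exists>w\<in>ball (Ctr \<gamma> i) (min e r0). w \<in> Zc \<gamma>) \<and>
       ((\<forall>i\<in>{1..M}. \<exists>w\<in>ball (Ctr \<gamma> i) r0. w \<in> Zc \<gamma>) \<and>
       (\<forall>i\<in>{1..M}. \<forall>j\<in>{1..M}. i \<noteq> j \<longrightarrow> 3 * r0 \<le> dist (Ctr \<gamma> i) (Ctr \<gamma> j)))"
    proof (rule eventually_conj[OF _ evG0])
      show "\<forall>\<^sub>F \<gamma> in at (0::real). \<forall>i\<in>{1..M}. \<exists>w\<in>ball (Ctr \<gamma> i) (min e r0). w \<in> Zc \<gamma>"
        using good[of "min e r0"] e r0 by simp
    qed
    then show "\<forall>\<^sub>F \<gamma> in at 0. dist (\<zeta> \<gamma> i - Ctr \<gamma> i) 0 < e"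
    proof eventually_elim
      case (elim \<gamma>)
      then obtain w where w: "w \<in> ball (Ctr \<gamma> i) (min e r0)" "w \<in> Zc \<gamma>" using i by blast
      have "w \<in> ball (Ctr \<gamma> i) r0" using w(1) by auto
      then have "w = \<zeta> \<gamma> i" using key[of \<gamma>] elim w(2) i by blast
      then have "dist (Ctr \<gamma> i) (\<zeta> \<gamma> i) < e" using w(1) by auto
      then show ?case by (simp add: dist_norm norm_minus_commute)
    qed
  qed

  have part1: "\<exists>\<delta>>0. \<exists>\<zeta>::real \<Rightarrow> nat \<Rightarrow> complex.
        (\<forall>\<gamma>. \<gamma> \<noteq> 0 \<and> \<bar>\<gamma>\<bar> < \<delta> \<longrightarrow>
           bij_betw (\<zeta> \<gamma>) {1..M} (twist_zeros (S1 \<union> S2) m l (coupled_pos S1 z \<gamma>) linf) \<and>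
           (\<forall>i\<in>{1..M}. deriv (twist (S1 \<union> S2) m l (coupled_pos S1 z \<gamma>) linf) (\<zeta> \<gamma> i) \<noteq> 0)) \<and>
        (\<forall>i\<in>{1..M1}. ((\<lambda>\<gamma>. \<zeta> \<gamma> i) \<longlongrightarrow> \<zeta>1 i) (at (0::real))) \<and>
        (\<forall>i\<in>{M1<..M}. ((\<lambda>\<gamma>. \<zeta> \<gamma> i - complex_of_real (1 / \<gamma>)) \<longlongrightarrow> \<zeta>2 i) (at (0::real)))"
  proof -
    have A: "\<forall>\<gamma>. \<gamma> \<noteq> 0 \<and> \<bar>\<gamma>\<bar> < \<delta> \<longrightarrow>
           bij_betw (\<zeta> \<gamma>) {1..M} (twist_zeros (S1 \<union> S2) m l (coupled_pos S1 z \<gamma>) linf) \<and>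
           (\<forall>i\<in>{1..M}. deriv (twist (S1 \<union> S2) m l (coupled_pos S1 z \<gamma>) linf) (\<zeta> \<gamma> i) \<noteq> 0)"
    proof (intro allI impI)
      fix \<gamma> :: real assume h: "\<gamma> \<noteq> 0 \<and> \<bar>\<gamma>\<bar> < \<delta>"
      then have GS: "(\<forall>i\<in>{1..M}. \<exists>w\<in>ball (Ctr \<gamma> i) r0. w \<in> Zc \<gamma>) \<and>
         (\<forall>i\<in>{1..M}. \<forall>j\<in>{1..M}. i \<noteq> j \<longrightarrow> 3 * r0 \<le> dist (Ctr \<gamma> i) (Ctr \<gamma> j))"
        using \<delta>(2)[of \<gamma>] by simp
      note k0 = key[OF conjunct1[OF GS] conjunct2[OF GS]]
      show "bij_betw (\<zeta> \<gamma>) {1..M} (twist_zeros (S1 \<union> S2) m l (coupled_pos S1 z \<gamma>) linf) \<and>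
           (\<forall>i\<in>{1..M}. deriv (twist (S1 \<union> S2) m l (coupled_pos S1 z \<gamma>) linf) (\<zeta> \<gamma> i) \<noteq> 0)"
        using conjunct1[OF conjunct2[OF k0]] conjunct1[OF conjunct2[OF conjunct2[OF k0]]]
        unfolding Zc_def by (rule conjI)
    qed
    have B: "\<forall>i\<in>{1..M1}. ((\<lambda>\<gamma>. \<zeta> \<gamma> i) \<longlongrightarrow> \<zeta>1 i) (at (0::real))"
    proof
      fix i assume i: "i \<in> {1..M1}"
      then have iI: "i \<in> {1..M}" and le: "i \<le> M1" using M1M by auto
      have "(\<lambda>\<gamma>. \<zeta> \<gamma> i - Ctr \<gamma> i) = (\<lambda>\<gamma>. \<zeta> \<gamma> i - \<zeta>1 i)" using le by (simp add: Ctr_def)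
      then have "((\<lambda>\<gamma>. \<zeta> \<gamma> i - \<zeta>1 i) \<longlongrightarrow> 0) (at (0::real))" using conv[OF iI] by simp
      then show "((\<lambda>\<gamma>. \<zeta> \<gamma> i) \<longlongrightarrow> \<zeta>1 i) (at (0::real))" by (rule LIM_zero_cancel)
    qed
    have C: "\<forall>i\<in>{M1<..M}. ((\<lambda>\<gamma>. \<zeta> \<gamma> i - complex_of_real (1 / \<gamma>)) \<longlongrightarrow> \<zeta>2 i) (at (0::real))"
    proof
      fix i assume i: "i \<in> {M1<..M}"
      then have iI: "i \<in> {1..M}" and le: "\<not> i \<le> M1" by auto
      have "(\<lambda>\<gamma>. \<zeta> \<gamma> i - Ctr \<gamma> i) = (\<lambda>\<gamma>. \<zeta> \<gamma> i - complex_of_real (1 / \<gamma>) - \<zeta>2 i)"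
        using le by (simp add: Ctr_def algebra_simps)
      then have "((\<lambda>\<gamma>. \<zeta> \<gamma> i - complex_of_real (1 / \<gamma>) - \<zeta>2 i) \<longlongrightarrow> 0) (at (0::real))"
        using conv[OF iI] by simp
      then show "((\<lambda>\<gamma>. \<zeta> \<gamma> i - complex_of_real (1 / \<gamma>)) \<longlongrightarrow> \<zeta>2 i) (at (0::real))" by (rule LIM_zero_cancel)
    qed
    show ?thesis
      apply (rule exI[of _ \<delta>])
      apply (rule conjI[OF \<delta>(1)])
      apply (rule exI[of _ \<zeta>])
      by (rule conjI[OF A conjI[OF B C]])
  qed

  have part2: "\<forall>\<delta>>0. \<forall>\<zeta>::real \<Rightarrow> nat \<Rightarrow> complex.
        ((\<forall>\<gamma>. \<gamma> \<noteq> 0 \<and> \<bar>\<gamma>\<bar> < \<delta> \<longrightarrow>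
           bij_betw (\<zeta> \<gamma>) {1..M} (twist_zeros (S1 \<union> S2) m l (coupled_pos S1 z \<gamma>) linf)) \<and>
         (\<forall>i\<in>{1..M1}. ((\<lambda>\<gamma>. \<zeta> \<gamma> i) \<longlongrightarrow> \<zeta>1 i) (at (0::real))) \<and>
         (\<forall>i\<in>{M1<..M}. ((\<lambda>\<gamma>. \<zeta> \<gamma> i - complex_of_real (1 / \<gamma>)) \<longlongrightarrow> \<zeta>2 i) (at (0::real))))
        \<longrightarrow> (\<forall>c. ((\<lambda>\<gamma>. \<Sum>i\<in>{1..M}. \<epsilon> i *
                  local_charge (S1 \<union> S2) m l (coupled_pos S1 z \<gamma>) linf K (\<zeta> \<gamma> i) c)
               \<longlongrightarrow> (\<Sum>i\<in>{1..M1}. \<epsilon> i * local_charge S1 m l z linf K (\<zeta>1 i) c)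
                 + (\<Sum>i\<in>{M1<..M}. \<epsilon> i * local_charge S2 m l z linf K (\<zeta>2 i) c))
             (at (0::real)))"
  proof (intro allI impI)
    fix d :: real and \<xi> :: "real \<Rightarrow> nat \<Rightarrow> complex" and c :: 'c
    assume d: "d > 0"
    assume H: "(\<forall>\<gamma>. \<gamma> \<noteq> 0 \<and> \<bar>\<gamma>\<bar> < d \<longrightarrow>
           bij_betw (\<xi> \<gamma>) {1..M} (twist_zeros (S1 \<union> S2) m l (coupled_pos S1 z \<gamma>) linf)) \<and>
         (\<forall>i\<in>{1..M1}. ((\<lambda>\<gamma>. \<xi> \<gamma> i) \<longlongrightarrow> \<zeta>1 i) (at (0::real))) \<and>
         (\<forall>i\<in>{M1<..M}. ((\<lambda>\<gamma>. \<xi> \<gamma> i - complex_of_real (1 / \<gamma>)) \<longlongrightarrow> \<zeta>2 i) (at (0::real)))"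
    have H1: "\<forall>\<gamma>. \<gamma> \<noteq> 0 \<and> \<bar>\<gamma>\<bar> < d \<longrightarrow>
           bij_betw (\<xi> \<gamma>) {1..M} (twist_zeros (S1 \<union> S2) m l (coupled_pos S1 z \<gamma>) linf)"
      using H by (rule conjunct1)
    have H2: "\<forall>i\<in>{1..M1}. ((\<lambda>\<gamma>. \<xi> \<gamma> i) \<longlongrightarrow> \<zeta>1 i) (at (0::real))"
      using H by (rule conjunct1[OF conjunct2])
    have H3: "\<forall>i\<in>{M1<..M}. ((\<lambda>\<gamma>. \<xi> \<gamma> i - complex_of_real (1 / \<gamma>)) \<longlongrightarrow> \<zeta>2 i) (at (0::real))"
      using H by (rule conjunct2[OF conjunct2])
    have evz: "\<forall>\<^sub>F \<gamma> in at (0::real). \<xi> \<gamma> i \<notin> coupled_pos S1 z \<gamma> ` (S1 \<union> S2)" if iM: "i \<in> {1..M}" for i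
    proof -
      have "\<exists>d>0. \<forall>x\<in>UNIV. x \<noteq> 0 \<and> dist x (0::real) < d \<longrightarrow> \<xi> x i \<notin> coupled_pos S1 z x ` (S1 \<union> S2)"
      proof (intro exI[of _ d] conjI ballI impI)
        show "d > 0" by (rule d)
        fix x :: real assume "x \<noteq> 0 \<and> dist x 0 < d"
        then have "x \<noteq> 0 \<and> \<bar>x\<bar> < d" by simp
        then have "bij_betw (\<xi> x) {1..M} (twist_zeros (S1 \<union> S2) m l (coupled_pos S1 z x) linf)"
          using spec[OF H1, of x] by (rule mp[rotated])
        then have "\<xi> x i \<in> twist_zeros (S1 \<union> S2) m l (coupled_pos S1 z x) linf"
          by (rule bij_betw_apply) (rule iM)
        then show "\<xi> x i \<notin> coupled_pos S1 z x ` (S1 \<union> S2)" unfolding twist_zeros_def by simp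
      qed
      then show ?thesis by (simp only: eventually_at)
    qed
    have L1: "((\<lambda>\<gamma>. local_charge (S1 \<union> S2) m l (coupled_pos S1 z \<gamma>) linf K (\<xi> \<gamma> i) c)
        \<longlongrightarrow> local_charge S1 m l z linf K (\<zeta>1 i) c) (at 0)" if i: "i \<in> {1..M1}" for i
    proof (rule LC_lim[OF finU _ _ evz])
      show "S1 \<subseteq> S1 \<union> S2" by simp
      show "i \<in> {1..M}" using i M1M by auto
      show "\<zeta>1 i \<notin> z ` S1" using Z1[OF i] by simp
      show "deriv (twist S1 m l z linf) (\<zeta>1 i) \<noteq> 0" using simple1[OF i] .
      have lim: "((\<lambda>\<gamma>. \<xi> \<gamma> i) \<longlongrightarrow> \<zeta>1 i) (at (0::real))" by (rule bspec[OF H2 i])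
      fix \<alpha> assume \<alpha>: "\<alpha> \<in> S1 \<union> S2"
      show "((\<lambda>\<gamma>. inverse (\<xi> \<gamma> i - coupled_pos S1 z \<gamma> \<alpha>)) \<longlongrightarrow>
          (if \<alpha> \<in> S1 then inverse (\<zeta>1 i - z \<alpha>) else 0)) (at 0)"
      proof (cases "\<alpha> \<in> S1")
        case True
        have nz: "\<zeta>1 i - z \<alpha> \<noteq> 0" using Z1[OF i] True by auto
        have "((\<lambda>\<gamma>. inverse (\<xi> \<gamma> i - z \<alpha>)) \<longlongrightarrow> inverse (\<zeta>1 i - z \<alpha>)) (at (0::real))"
          by (intro tendsto_intros lim nz)
        then show ?thesis using True by (simp add: coupled_pos_def)
      next
        case False
        have "((\<lambda>\<gamma>. \<xi> \<gamma> i - z \<alpha>) \<longlongrightarrow> \<zeta>1 i - z \<alpha>) (at (0::real))" by (intro tendsto_intros lim)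
        from inv_shift_lim(1)[OF this]
        show ?thesis using False by (simp add: coupled_pos_def algebra_simps)
      qed
    qed
    have L2: "((\<lambda>\<gamma>. local_charge (S1 \<union> S2) m l (coupled_pos S1 z \<gamma>) linf K (\<xi> \<gamma> i) c)
        \<longlongrightarrow> local_charge S2 m l z linf K (\<zeta>2 i) c) (at 0)" if i: "i \<in> {M1<..M}" for i
    proof (rule LC_lim[OF finU _ _ evz])
      show "S2 \<subseteq> S1 \<union> S2" by simp
      show "i \<in> {1..M}" using i by auto
      show "\<zeta>2 i \<notin> z ` S2" using Z2[OF i] by simp
      show "deriv (twist S2 m l z linf) (\<zeta>2 i) \<noteq> 0" using simple2[OF i] .
      have lim: "((\<lambda>\<gamma>. \<xi> \<gamma> i - complex_of_real (1 / \<gamma>)) \<longlongrightarrow> \<zeta>2 i) (at (0::real))" by (rule bspec[OF H3 i])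
      fix \<alpha> assume \<alpha>: "\<alpha> \<in> S1 \<union> S2"
      show "((\<lambda>\<gamma>. inverse (\<xi> \<gamma> i - coupled_pos S1 z \<gamma> \<alpha>)) \<longlongrightarrow>
          (if \<alpha> \<in> S2 then inverse (\<zeta>2 i - z \<alpha>) else 0)) (at 0)"
      proof (cases "\<alpha> \<in> S2")
        case True
        then have nS1: "\<alpha> \<notin> S1" using disj by auto
        have nz: "\<zeta>2 i - z \<alpha> \<noteq> 0" using Z2[OF i] True by auto
        have "((\<lambda>\<gamma>. inverse (\<xi> \<gamma> i - complex_of_real (1 / \<gamma>) - z \<alpha>)) \<longlongrightarrow> inverse (\<zeta>2 i - z \<alpha>)) (at (0::real))"
          by (intro tendsto_intros lim nz)
        then show ?thesis using True nS1 by (simp add: coupled_pos_def algebra_simps)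
      next
        case False
        then have S1: "\<alpha> \<in> S1" using \<alpha> by auto
        have "((\<lambda>\<gamma>. \<xi> \<gamma> i - complex_of_real (1 / \<gamma>) - z \<alpha>) \<longlongrightarrow> \<zeta>2 i - z \<alpha>) (at (0::real))"
          by (intro tendsto_intros lim)
        from inv_shift_lim(2)[OF this]
        show ?thesis using False S1 by (simp add: coupled_pos_def algebra_simps)
      qed
    qed
    have split: "(\<Sum>i\<in>{1..M}. \<epsilon> i * local_charge (S1 \<union> S2) m l (coupled_pos S1 z \<gamma>) linf K (\<xi> \<gamma> i) c)
        = (\<Sum>i\<in>{1..M1}. \<epsilon> i * local_charge (S1 \<union> S2) m l (coupled_pos S1 z \<gamma>) linf K (\<xi> \<gamma> i) c)
        + (\<Sum>i\<in>{M1<..M}. \<epsilon> i * local_charge (S1 \<union> S2) m l (coupled_pos S1 z \<gamma>) linf K (\<xi> \<gamma> i) c)" for \<gamma>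
      unfolding Iun by (rule sum.union_disjoint) auto
    show "((\<lambda>\<gamma>. \<Sum>i\<in>{1..M}. \<epsilon> i *
                  local_charge (S1 \<union> S2) m l (coupled_pos S1 z \<gamma>) linf K (\<xi> \<gamma> i) c)
               \<longlongrightarrow> (\<Sum>i\<in>{1..M1}. \<epsilon> i * local_charge S1 m l z linf K (\<zeta>1 i) c)
                 + (\<Sum>i\<in>{M1<..M}. \<epsilon> i * local_charge S2 m l z linf K (\<zeta>2 i) c))
             (at (0::real))"
    proof -
      have T1: "((\<lambda>\<gamma>. \<Sum>i\<in>{1..M1}. \<epsilon> i * local_charge (S1 \<union> S2) m l (coupled_pos S1 z \<gamma>) linf K (\<xi> \<gamma> i) c)
          \<longlongrightarrow> (\<Sum>i\<in>{1..M1}. \<epsilon> i * local_charge S1 m l z linf K (\<zeta>1 i) c)) (at (0::real))"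
        by (rule tendsto_sum, rule tendsto_mult[OF tendsto_const], erule L1)
      have T2: "((\<lambda>\<gamma>. \<Sum>i\<in>{M1<..M}. \<epsilon> i * local_charge (S1 \<union> S2) m l (coupled_pos S1 z \<gamma>) linf K (\<xi> \<gamma> i) c)
          \<longlongrightarrow> (\<Sum>i\<in>{M1<..M}. \<epsilon> i * local_charge S2 m l z linf K (\<zeta>2 i) c)) (at (0::real))"
        by (rule tendsto_sum, rule tendsto_mult[OF tendsto_const], erule L2)
      show ?thesis unfolding split by (rule tendsto_add[OF T1 T2])
    qed
  qed
  show ?thesis using part1 part2 by (rule conjI)
qed

end
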